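(* Let $r>1$, let $V:\mathbb{R}\to\mathbb{R}$ be convex and $L$-Lipschitz with $V'$ also $L$-Lipschitz, such that $m:=e^{-V}$ is a probability density, and let $\rho=e^{-(r+1)V}$. Let $0<c<C<\infty$ and $f\in\mathcal{P}_{c,C}$. Then there exists a constant $\lambda\ge 0$ depending only on $V$, $c$ and $C$ such that the functional $\mathcal{F}_\rho[g]:=\int_{\mathbb{R}}\frac{\rho(x)}{g(x)^r}\,dx$ is $(-\lambda)$-convex along the $W_2$-geodesic $(\mu_t)_{t\in[0,1]}$ linking $m$ and $f$, i.e. for all $t\in[0,1]$, $$\mathcal{F}_\rho[\mu_t]\le (1-t)\mathcal{F}_\rho[\mu_0]+t\,\mathcal{F}_\rho[\mu_1]+\frac{\lambda}{2}t(1-t)W_2(m,f)^2 .$$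
   Context: $\mathcal{P}_{c,C}:=\{g\in\mathcal{P}(\mathbb{R}):\ c\,m\le g\le C\,m\}$. $W_2$ is the quadratic Wasserstein distance: $W_2(\mu,\nu)^2=\inf_\pi\int|x-y|^2\,d\pi$ over couplings $\pi$ of $\mu,\nu$. The $W_2$-geodesic from $\mu_0=m$ to $\mu_1=f$ is $\mu_t=((1-t)\mathrm{id}+tT)_\# m$, where $T=F_f^{-1}\circ F_m$ is the (monotone) optimal transport map from $m$ to $f$, $F$ denoting cumulative distribution functions. *)

theory Defs
  imports "HOL-Probability.Probability"
begin

definition quantile :: "real measure \<Rightarrow> real \<Rightarrow> real" where
  "quantile M u = Inf {x. u \<le> cdf M x}"

definition ot_map :: "real measure \<Rightarrow> real measure \<Rightarrow> real \<Rightarrow> real" where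
  "ot_map \<mu> \<nu> = quantile \<nu> \<circ> cdf \<mu>"

definition w2_geodesic :: "real measure \<Rightarrow> real measure \<Rightarrow> real \<Rightarrow> real measure" where
  "w2_geodesic \<mu> \<nu> t = distr \<mu> lborel (\<lambda>x. (1 - t) * x + t * ot_map \<mu> \<nu> x)"

definition couplings :: "real measure \<Rightarrow> real measure \<Rightarrow> (real \<times> real) measure set" where
  "couplings \<mu> \<nu> = {\<pi>. prob_space \<pi> \<and> sets \<pi> = sets (borel :: (real \<times> real) measure) \<and>
      distr \<pi> borel fst = \<mu> \<and> distr \<pi> borel snd = \<nu>}"

definition W2sq :: "real measure \<Rightarrow> real measure \<Rightarrow> ennreal" where
  "W2sq \<mu> \<nu> = (INF \<pi> \<in> couplings \<mu> \<nu>. \<integral>\<^sup>+ p. ennreal ((fst p - snd p)\<^sup>2) \<partial>\<pi>)"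

definition is_density :: "real measure \<Rightarrow> (real \<Rightarrow> real) \<Rightarrow> bool" where
  "is_density \<mu> g \<longleftrightarrow> g \<in> borel_measurable borel \<and> (\<forall>x. 0 \<le> g x) \<and> \<mu> = density lborel g"

definition Frho :: "real \<Rightarrow> (real \<Rightarrow> real) \<Rightarrow> real measure \<Rightarrow> ennreal" where
  "Frho r \<rho> \<mu> = (if \<exists>g. is_density \<mu> g then
      (let g = (SOME g. is_density \<mu> g) in
        \<integral>\<^sup>+ x. (if 0 < g x then ennreal (\<rho> x / g x powr r) else \<infinity>) \<partial>lborel)
    else \<infinity>)"

definition Pcc :: "(real \<Rightarrow> real) \<Rightarrow> real \<Rightarrow> real \<Rightarrow> (real \<Rightarrow> real) set" where
  "Pcc m c C = {g. g \<in> borel_measurable borel \<and> (g has_integral 1) UNIV \<and>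
      (\<forall>x. c * m x \<le> g x \<and> g x \<le> C * m x)}"

end

theory Submission
  imports Defs
begin

locale pdens =
  fixes h :: "real \<Rightarrow> real"
  assumes h_meas[measurable]: "h \<in> borel_measurable borel"
    and h_pos: "\<And>x. 0 < h x"
    and h_int: "(\<integral>\<^sup>+x. ennreal (h x) \<partial>lborel) = 1"
begin

definition "HH = density lborel (\<lambda>x. ennreal (h x))"
definition "FF = cdf HH"

lemma sets_HH[simp, measurable_cong]: "sets HH = sets borel"
  by (simp add: HH_def)

lemma space_HH[simp]: "space HH = UNIV"
  by (simp add: HH_def)

lemma prob_HH: "prob_space HH"
  by (rule prob_spaceI) (simp add: HH_def emeasure_density h_int)

lemma real_distr_HH: "real_distribution HH"
  unfolding real_distribution_def real_distribution_axioms_def using prob_HH by simp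

sublocale HH: real_distribution HH by (rule real_distr_HH)

lemma emeasure_HH: "A \<in> sets borel \<Longrightarrow> emeasure HH A = (\<integral>\<^sup>+x. ennreal (h x) * indicator A x \<partial>lborel)"
  by (simp add: HH_def emeasure_density)

lemma emeasure_HH_pos:
  assumes "a < b" shows "emeasure HH {a<..b} > 0"
proof (rule ccontr)
  assume "\<not> ?thesis"
  then have "(\<integral>\<^sup>+x. ennreal (h x) * indicator {a<..b} x \<partial>lborel) = 0"
    by (simp add: emeasure_HH)
  then have "AE x in lborel. ennreal (h x) * indicator {a<..b} x = 0"
    by (subst (asm) nn_integral_0_iff_AE) auto
  then have "AE x in lborel. x \<notin> {a<..b}"
  proof eventually_elim
    fix x assume "ennreal (h x) * indicator {a<..b} x = 0"
    with h_pos[of x] show "x \<notin> {a<..b}" by (auto simp: indicator_def ennreal_eq_0_iff)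
  qed
  then have "emeasure lborel {a<..b} = 0"
    by (subst (asm) AE_iff_measurable[OF _ refl]) (auto simp: greaterThanAtMost_def greaterThan_def atMost_def Int_def)
  with assms show False by simp
qed

lemma FF_strict: assumes "a < b" shows "FF a < FF b"
proof -
  have "FF b - FF a = measure HH {a<..b}"
    unfolding FF_def using assms by (intro HH.cdf_diff_eq) auto
  moreover have "measure HH {a<..b} > 0"
    using emeasure_HH_pos[OF assms] by (simp add: HH.emeasure_eq_measure)
  ultimately show ?thesis by simp
qed

lemma FF_strict_mono: "strict_mono FF"
  using FF_strict by (auto simp: strict_mono_def)

lemma FF_mono: "a \<le> b \<Longrightarrow> FF a \<le> FF b"
  using FF_strict by (cases "a = b") (auto intro: less_imp_le)

lemma FF_less_iff: "FF a < FF b \<longleftrightarrow> a < b"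
  using FF_strict by (metis not_less_iff_gr_or_eq order_less_asym)

lemma FF_le_iff: "FF a \<le> FF b \<longleftrightarrow> a \<le> b"
  using FF_less_iff by (meson not_less)

lemma FF_eq_iff: "FF a = FF b \<longleftrightarrow> a = b"
  by (metis FF_le_iff antisym order_refl)

lemma FF_cont: "isCont FF x"
proof -
  have "emeasure HH {x} = (\<integral>\<^sup>+y. ennreal (h y) * indicator {x} y \<partial>lborel)"
    by (simp add: emeasure_HH)
  also have "\<dots> = 0"
  proof (subst nn_integral_0_iff_AE)
    show "AE y in lborel. ennreal (h y) * indicator {x} y = 0"
      using AE_lborel_singleton[of x] by eventually_elim auto
  qed auto
  finally have "measure HH {x} = 0" by (simp add: HH.emeasure_eq_measure)
  then show ?thesis unfolding FF_def by (simp add: HH.isCont_cdf)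
qed

lemma FF_contin: "continuous_on A FF"
  using FF_cont by (simp add: continuous_at_imp_continuous_on)

lemma FF_pos: "0 < FF x"
  using FF_strict[of "x - 1" x] HH.cdf_nonneg[of "x - 1"] unfolding FF_def by simp

lemma FF_lt1: "FF x < 1"
  using FF_strict[of x "x + 1"] HH.cdf_bounded_prob[of "x + 1"] unfolding FF_def by simp

lemma FF_surj: assumes "0 < u" "u < 1" shows "\<exists>x. FF x = u"
proof -
  have "eventually (\<lambda>x. FF x < u) at_bot"
    using order_tendstoD(2)[OF HH.cdf_lim_at_bot assms(1)] unfolding FF_def .
  then obtain a where a: "FF a < u" by (auto simp: eventually_at_bot_linorder)
  have "eventually (\<lambda>x. u < FF x) at_top"
    using order_tendstoD(1)[OF HH.cdf_lim_at_top_prob assms(2)] unfolding FF_def .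
  then obtain b where b: "u < FF b" by (auto simp: eventually_at_top_linorder)
  have "a \<le> b" using a b FF_le_iff by (meson less_le_not_le order.trans nle_le)
  from IVT'[of FF a u b, OF _ _ this FF_contin] a b show ?thesis by auto
qed

lemma emeasure_FF: "emeasure HH {..x} = ennreal (FF x)"
  by (simp add: FF_def cdf_def HH.emeasure_eq_measure)

lemma emeasure_SS: "emeasure HH {x<..} = ennreal (1 - FF x)"
proof -
  have "UNIV - {..x} = {x<..}" by auto
  then have "measure HH {x<..} = 1 - measure HH {..x}"
    using HH.prob_compl[of "{..x}"] by simp
  then show ?thesis by (simp add: FF_def cdf_def HH.emeasure_eq_measure)
qed

definition "QQ u = quantile HH u"

lemma QQ_FF[simp]: "QQ (FF x) = x"
proof -
  have "{y. FF x \<le> cdf HH y} = {x..}" using FF_le_iff unfolding FF_def by auto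
  then show ?thesis by (simp add: QQ_def quantile_def)
qed

lemma FF_QQ[simp]: assumes "0 < u" "u < 1" shows "FF (QQ u) = u"
  using FF_surj[OF assms] by auto

lemma QQ_less_iff: assumes "0 < u" "u < 1" "0 < v" "v < 1" shows "QQ u < QQ v \<longleftrightarrow> u < v"
  using FF_less_iff[of "QQ u" "QQ v"] assms by simp

lemma QQ_cont: assumes "0 < u" "u < 1" shows "isCont QQ u"
proof -
  obtain x where x: "FF x = u" using FF_surj[OF assms] by auto
  have "isCont QQ (FF x)"
    by (rule isCont_inverse_function2[of "x - 1" x "x + 1"]) (auto intro: FF_cont)
  then show ?thesis using x by simp
qed

end

locale Vset =
  fixes V :: "real \<Rightarrow> real" and L :: real
  assumes V_convex: "convex_on UNIV V"
    and V_lip: "L-lipschitz_on UNIV V"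
    and V_diff: "\<forall>x. V differentiable (at x)"
    and V'_lip: "L-lipschitz_on UNIV (deriv V)"
    and m_prob: "((\<lambda>x. exp (- V x)) has_integral 1) UNIV"
begin

lemma L_nonneg: "0 \<le> L" using V_lip lipschitz_on_nonneg by blast

lemma V_deriv: "(V has_real_derivative deriv V x) (at x)"
  using V_diff DERIV_deriv_iff_real_differentiable by blast

lemma V_isCont: "isCont V x"
  using V_deriv DERIV_isCont by blast

lemma V_contin: "continuous_on A V"
  using V_isCont by (simp add: continuous_at_imp_continuous_on)

lemma V_lipD: "\<bar>V x - V y\<bar> \<le> L * \<bar>x - y\<bar>"
  using lipschitz_onD[OF V_lip, of x y] by (simp add: dist_real_def)

lemma V'_lipD: "\<bar>deriv V x - deriv V y\<bar> \<le> L * \<bar>x - y\<bar>"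
  using lipschitz_onD[OF V'_lip, of x y] by (simp add: dist_real_def)

lemma V_tangent: "V y - V x \<ge> deriv V x * (y - x)"
  by (rule convex_on_imp_above_tangent[OF V_convex]) (auto intro: has_field_derivative_at_within V_deriv)

lemma V'_mono: assumes "x \<le> y" shows "deriv V x \<le> deriv V y"
proof -
  have "V y - V x \<ge> deriv V x * (y - x)" "V x - V y \<ge> deriv V y * (x - y)"
    by (rule V_tangent)+
  then have "(deriv V y - deriv V x) * (y - x) \<ge> 0" by (simp add: algebra_simps)
  then show ?thesis using assms
    by (cases "x = y") (auto simp: zero_le_mult_iff)
qed

lemma V_semiconcave:
  assumes t: "0 \<le> t" "t \<le> 1"
  shows "V (x + t * d) \<ge> (1 - t) * V x + t * V (x + d) - L / 2 * t * (1 - t) * d\<^sup>2"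
proof -
  define k where "k s = L / 2 * d\<^sup>2 * s\<^sup>2 - V (x + s * d)" for s
  define k' where "k' s = L * d\<^sup>2 * s - deriv V (x + s * d) * d" for s
  have kd: "(k has_real_derivative k' s) (at s)" for s
  proof -
    have "((\<lambda>s. x + s * d) has_real_derivative d) (at s)"
      by (auto intro!: derivative_eq_intros)
    from DERIV_chain2[OF V_deriv this]
    have "((\<lambda>s. V (x + s * d)) has_real_derivative deriv V (x + s * d) * d) (at s)" .
    moreover have "((\<lambda>s. L / 2 * d\<^sup>2 * s\<^sup>2) has_real_derivative L * d\<^sup>2 * s) (at s)"
      by (auto intro!: derivative_eq_intros simp: power2_eq_square)
    ultimately show ?thesis unfolding k_def k'_def by (intro DERIV_diff)
  qed
  have km: "k' s1 \<le> k' s2" if "s1 \<le> s2" for s1 s2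
  proof -
    have "\<bar>deriv V (x + s2 * d) - deriv V (x + s1 * d)\<bar> \<le> L * \<bar>(s2 - s1) * d\<bar>"
      using V'_lipD[of "x + s2 * d" "x + s1 * d"] by (simp add: algebra_simps)
    then have "(deriv V (x + s2 * d) - deriv V (x + s1 * d)) * d \<le> L * \<bar>(s2 - s1) * d\<bar> * \<bar>d\<bar>"
    proof -
      let ?A = "deriv V (x + s2 * d) - deriv V (x + s1 * d)"
      have "?A * d \<le> \<bar>?A * d\<bar>" by (rule abs_ge_self)
      also have "\<dots> = \<bar>?A\<bar> * \<bar>d\<bar>" by (rule abs_mult)
      also have "\<dots> \<le> L * \<bar>(s2 - s1) * d\<bar> * \<bar>d\<bar>"
        by (rule mult_right_mono[OF \<open>\<bar>?A\<bar> \<le> _\<close>]) simp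
      finally show ?thesis .
    qed
    also have "\<dots> = L * d\<^sup>2 * (s2 - s1)" using that by (simp add: abs_mult power2_eq_square)
    finally show ?thesis unfolding k'_def by (simp add: algebra_simps)
  qed
  have conv: "convex_on UNIV k"
    by (rule convex_on_realI[where f' = k']) (auto intro: kd km)
  have "k ((1 - t) * 0 + t * 1) \<le> (1 - t) * k 0 + t * k 1"
    using convex_onD[OF conv, of t 0 1] t by simp
  then have E: "L / 2 * d\<^sup>2 * t\<^sup>2 - V (x + t * d) \<le> (1 - t) * (- V x) + t * (L / 2 * d\<^sup>2 - V (x + d))"
    by (simp add: k_def)
  have "L / 2 * t * (1 - t) * d\<^sup>2 = t * (L / 2 * d\<^sup>2) - L / 2 * d\<^sup>2 * t\<^sup>2"
    by (simp add: field_simps power2_eq_square)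
  moreover have "(1 - t) * (- V x) = t * V x - V x" "(1 - t) * V x = V x - t * V x"
    "t * (L / 2 * d\<^sup>2 - V (x + d)) = t * (L / 2 * d\<^sup>2) - t * V (x + d)"
    by (simp_all add: algebra_simps)
  ultimately show ?thesis using E by linarith
qed

definition "m x = exp (- V x)"

lemma m_pos: "0 < m x" by (simp add: m_def)

lemma m_meas[measurable]: "m \<in> borel_measurable borel"
  unfolding m_def by (intro borel_measurable_continuous_onI continuous_intros V_contin)

lemma m_int: "(\<integral>\<^sup>+x. ennreal (m x) \<partial>lborel) = 1"
  using nn_integral_has_integral_lebesgue[OF _ m_prob] by (simp add: m_def)

sublocale mM: pdens m
  by unfold_locales (auto simp: m_pos m_int)


lemma ex_neg: "\<exists>x0. deriv V x0 < 0"
proof (rule ccontr)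
  assume "\<not> ?thesis"
  then have nn: "deriv V x \<ge> 0" for x by (meson not_less)
  have Vle: "V x \<le> V 0" if "x \<le> 0" for x
  proof -
    have "V 0 - V x \<ge> deriv V x * (0 - x)" by (rule V_tangent)
    moreover have "deriv V x * (0 - x) \<ge> 0" using nn[of x] that by (simp add: mult_nonneg_nonpos)
    ultimately show ?thesis by simp
  qed
  obtain n :: nat where n: "real n > exp (V 0)" using reals_Archimedean2 by blast
  have "ennreal (exp (- V 0)) * emeasure lborel {- real n..0} = (\<integral>\<^sup>+x. ennreal (exp (- V 0)) * indicator {- real n..0} x \<partial>lborel)"
    by (simp add: nn_integral_cmult_indicator)
  also have "\<dots> \<le> (\<integral>\<^sup>+x. ennreal (m x) \<partial>lborel)"
    by (rule nn_integral_mono) (auto simp: indicator_def m_def Vle)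
  finally have "ennreal (exp (- V 0) * real n) \<le> 1" using m_int by (simp add: ennreal_mult')
  then have "exp (- V 0) * real n \<le> 1" by (simp add: ennreal_le_1)
  moreover have "exp (- V 0) * real n > exp (- V 0) * exp (V 0)" using n by simp
  ultimately show False by (simp add: exp_minus field_simps)
qed

lemma ex_pos: "\<exists>x1. deriv V x1 > 0"
proof (rule ccontr)
  assume "\<not> ?thesis"
  then have nn: "deriv V x \<le> 0" for x by (auto simp: not_less)
  have Vle: "V x \<le> V 0" if "x \<ge> 0" for x
  proof -
    have "V 0 - V x \<ge> deriv V x * (0 - x)" by (rule V_tangent)
    moreover have "deriv V x * (0 - x) \<ge> 0" using nn[of x] that by (simp add: mult_nonpos_nonneg)
    ultimately show ?thesis by simp
  qed
  obtain n :: nat where n: "real n > exp (V 0)" using reals_Archimedean2 by blast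
  have "ennreal (exp (- V 0)) * emeasure lborel {0..real n} = (\<integral>\<^sup>+x. ennreal (exp (- V 0)) * indicator {0..real n} x \<partial>lborel)"
    by (simp add: nn_integral_cmult_indicator)
  also have "\<dots> \<le> (\<integral>\<^sup>+x. ennreal (m x) \<partial>lborel)"
    by (rule nn_integral_mono) (auto simp: indicator_def m_def Vle)
  finally have "ennreal (exp (- V 0) * real n) \<le> 1" using m_int by (simp add: ennreal_mult')
  then have "exp (- V 0) * real n \<le> 1" by (simp add: ennreal_le_1)
  moreover have "exp (- V 0) * real n > exp (- V 0) * exp (V 0)" using n by simp
  ultimately show False by (simp add: exp_minus field_simps)
qed

lemma tailA:
  assumes "y \<le> w" "w \<le> x0"
  shows "mM.FF y \<le> exp (deriv V x0 * (w - y)) * mM.FF w"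
proof -
  define s where "s = w - y"
  have s: "s \<ge> 0" using assms by (simp add: s_def)
  have "ennreal (mM.FF y) = (\<integral>\<^sup>+z. ennreal (m z) * indicator {..y} z \<partial>lborel)"
    by (simp add: mM.emeasure_FF[symmetric] mM.emeasure_HH)
  also have "\<dots> = (\<integral>\<^sup>+x. ennreal (m (- s + 1 * x)) * indicator {..y} (- s + 1 * x) \<partial>lborel)"
    using nn_integral_real_affine[of "\<lambda>z. ennreal (m z) * indicator {..y} z" 1 "- s"] by simp
  also have "\<dots> = (\<integral>\<^sup>+x. ennreal (m (x - s)) * indicator {..w} x \<partial>lborel)"
    by (intro nn_integral_cong) (auto simp: indicator_def s_def algebra_simps)
  also have "\<dots> \<le> (\<integral>\<^sup>+x. ennreal (exp (deriv V x0 * s)) * (ennreal (m x) * indicator {..w} x) \<partial>lborel)"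
  proof (rule nn_integral_mono)
    fix x
    show "ennreal (m (x - s)) * indicator {..w} x \<le> ennreal (exp (deriv V x0 * s)) * (ennreal (m x) * indicator {..w} x)"
    proof (cases "x \<le> w")
      case True
      have "V (x - s) - V x \<ge> deriv V x * (x - s - x)" by (rule V_tangent)
      moreover have "deriv V x \<le> deriv V x0" using True assms by (intro V'_mono) simp
      ultimately have "V (x - s) \<ge> V x - deriv V x0 * s" using s mult_right_mono[of "deriv V x" "deriv V x0" s]
        by (simp add: algebra_simps)
      then have "m (x - s) \<le> exp (deriv V x0 * s) * m x"
        by (simp add: m_def mult_exp_exp)
      with True show ?thesis by (simp add: ennreal_mult'[symmetric] ennreal_leI)
    qed simp
  qed
  also have "\<dots> = ennreal (exp (deriv V x0 * s)) * ennreal (mM.FF w)"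
    by (subst nn_integral_cmult) (auto simp: mM.emeasure_FF[symmetric] mM.emeasure_HH)
  finally show ?thesis
    by (simp add: s_def ennreal_mult'[symmetric] ennreal_le_iff mM.FF_pos less_imp_le)
qed

lemma tailB:
  assumes "x1 \<le> w" "w \<le> y"
  shows "1 - mM.FF y \<le> exp (- deriv V x1 * (y - w)) * (1 - mM.FF w)"
proof -
  define s where "s = y - w"
  have s: "s \<ge> 0" using assms by (simp add: s_def)
  have "ennreal (1 - mM.FF y) = (\<integral>\<^sup>+z. ennreal (m z) * indicator {y<..} z \<partial>lborel)"
    by (simp add: mM.emeasure_SS[symmetric] mM.emeasure_HH)
  also have "\<dots> = (\<integral>\<^sup>+x. ennreal (m (s + 1 * x)) * indicator {y<..} (s + 1 * x) \<partial>lborel)"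
    using nn_integral_real_affine[of "\<lambda>z. ennreal (m z) * indicator {y<..} z" 1 s] by simp
  also have "\<dots> = (\<integral>\<^sup>+x. ennreal (m (x + s)) * indicator {w<..} x \<partial>lborel)"
    by (intro nn_integral_cong) (auto simp: indicator_def s_def add.commute)
  also have "\<dots> \<le> (\<integral>\<^sup>+x. ennreal (exp (- deriv V x1 * s)) * (ennreal (m x) * indicator {w<..} x) \<partial>lborel)"
  proof (rule nn_integral_mono)
    fix x
    show "ennreal (m (x + s)) * indicator {w<..} x \<le> ennreal (exp (- deriv V x1 * s)) * (ennreal (m x) * indicator {w<..} x)"
    proof (cases "w < x")
      case True
      have "V (x + s) - V x \<ge> deriv V x * (x + s - x)" by (rule V_tangent)
      moreover have "deriv V x1 \<le> deriv V x" using True assms by (intro V'_mono) simp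
      ultimately have "V (x + s) \<ge> V x + deriv V x1 * s" using s mult_right_mono[of "deriv V x1" "deriv V x" s]
        by (simp add: algebra_simps)
      then have "m (x + s) \<le> exp (- deriv V x1 * s) * m x"
        by (simp add: m_def mult_exp_exp)
      with True show ?thesis by (simp add: ennreal_mult'[symmetric] ennreal_leI)
    qed simp
  qed
  also have "\<dots> = ennreal (exp (- deriv V x1 * s)) * ennreal (1 - mM.FF w)"
    by (subst nn_integral_cmult) (auto simp: mM.emeasure_SS[symmetric] mM.emeasure_HH)
  finally show ?thesis
    using mM.FF_lt1[of w]
    by (simp add: s_def ennreal_mult'[symmetric] ennreal_le_iff)
qed

end

locale fset = Vset V L for V L +
  fixes c C :: real and f :: "real \<Rightarrow> real"
  assumes f_meas[measurable]: "f \<in> borel_measurable borel"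
    and f_int: "(f has_integral 1) UNIV"
    and f_bounds: "\<And>x. c * m x \<le> f x \<and> f x \<le> C * m x"
    and c_pos: "0 < c" and cC: "c < C"
begin

lemma f_pos: "0 < f x"
  using f_bounds[of x] c_pos m_pos[of x] by (smt (verit) mult_pos_pos)

lemma f_nn_int: "(\<integral>\<^sup>+x. ennreal (f x) \<partial>lborel) = 1"
  using nn_integral_has_integral_lebesgue[OF _ f_int] f_pos by (simp add: less_imp_le)

sublocale fN: pdens f
  by unfold_locales (auto simp: f_pos f_nn_int)

lemma C_pos: "0 < C" using c_pos cC by simp

lemma Ff_lower: "c * mM.FF y \<le> fN.FF y"
proof -
  have "ennreal c * ennreal (mM.FF y) = (\<integral>\<^sup>+x. ennreal c * (ennreal (m x) * indicator {..y} x) \<partial>lborel)"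
    by (subst nn_integral_cmult) (auto simp: mM.emeasure_FF[symmetric] mM.emeasure_HH)
  also have "\<dots> \<le> (\<integral>\<^sup>+x. ennreal (f x) * indicator {..y} x \<partial>lborel)"
    by (intro nn_integral_mono) (auto simp: indicator_def ennreal_mult'[symmetric] f_bounds c_pos less_imp_le intro!: ennreal_leI)
  also have "\<dots> = ennreal (fN.FF y)"
    by (simp add: fN.emeasure_FF[symmetric] fN.emeasure_HH)
  finally show ?thesis using c_pos mM.FF_pos[of y]
    by (simp add: ennreal_mult'[symmetric] ennreal_le_iff fN.FF_pos less_imp_le)
qed

lemma Ff_upper: "fN.FF y \<le> C * mM.FF y"
proof -
  have "ennreal (fN.FF y) = (\<integral>\<^sup>+x. ennreal (f x) * indicator {..y} x \<partial>lborel)"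
    by (simp add: fN.emeasure_FF[symmetric] fN.emeasure_HH)
  also have "\<dots> \<le> (\<integral>\<^sup>+x. ennreal C * (ennreal (m x) * indicator {..y} x) \<partial>lborel)"
    by (intro nn_integral_mono) (auto simp: indicator_def ennreal_mult'[symmetric] f_bounds C_pos less_imp_le intro!: ennreal_leI)
  also have "\<dots> = ennreal C * ennreal (mM.FF y)"
    by (subst nn_integral_cmult) (auto simp: mM.emeasure_FF[symmetric] mM.emeasure_HH)
  finally show ?thesis using C_pos mM.FF_pos[of y]
    by (simp add: ennreal_mult'[symmetric] ennreal_le_iff fN.FF_pos less_imp_le)
qed

lemma Sf_lower: "c * (1 - mM.FF y) \<le> 1 - fN.FF y"
proof -
  have "ennreal c * ennreal (1 - mM.FF y) = (\<integral>\<^sup>+x. ennreal c * (ennreal (m x) * indicator {y<..} x) \<partial>lborel)"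
    by (subst nn_integral_cmult) (auto simp: mM.emeasure_SS[symmetric] mM.emeasure_HH)
  also have "\<dots> \<le> (\<integral>\<^sup>+x. ennreal (f x) * indicator {y<..} x \<partial>lborel)"
    by (intro nn_integral_mono) (auto simp: indicator_def ennreal_mult'[symmetric] f_bounds c_pos less_imp_le intro!: ennreal_leI)
  also have "\<dots> = ennreal (1 - fN.FF y)"
    by (simp add: fN.emeasure_SS[symmetric] fN.emeasure_HH)
  finally show ?thesis using c_pos mM.FF_lt1[of y] fN.FF_lt1[of y]
    by (simp add: ennreal_mult'[symmetric] ennreal_le_iff)
qed

lemma Sf_upper: "1 - fN.FF y \<le> C * (1 - mM.FF y)"
proof -
  have "ennreal (1 - fN.FF y) = (\<integral>\<^sup>+x. ennreal (f x) * indicator {y<..} x \<partial>lborel)"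
    by (simp add: fN.emeasure_SS[symmetric] fN.emeasure_HH)
  also have "\<dots> \<le> (\<integral>\<^sup>+x. ennreal C * (ennreal (m x) * indicator {y<..} x) \<partial>lborel)"
    by (intro nn_integral_mono) (auto simp: indicator_def ennreal_mult'[symmetric] f_bounds C_pos less_imp_le intro!: ennreal_leI)
  also have "\<dots> = ennreal C * ennreal (1 - mM.FF y)"
    by (subst nn_integral_cmult) (auto simp: mM.emeasure_SS[symmetric] mM.emeasure_HH)
  finally show ?thesis using C_pos mM.FF_lt1[of y] fN.FF_lt1[of y]
    by (simp add: ennreal_mult'[symmetric] ennreal_le_iff)
qed

definition "T x = quantile fN.HH (mM.FF x)"
definition "Tinv y = mM.QQ (fN.FF y)"

lemma T_alt: "T x = fN.QQ (mM.FF x)"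
  by (simp add: T_def fN.QQ_def)

lemma FF_T[simp]: "fN.FF (T x) = mM.FF x"
  using mM.FF_pos[of x] mM.FF_lt1[of x] by (simp add: T_alt)

lemma T_Tinv[simp]: "T (Tinv y) = y"
  using fN.FF_pos[of y] fN.FF_lt1[of y] by (simp add: T_alt Tinv_def)

lemma Tinv_T[simp]: "Tinv (T x) = x"
  by (simp add: Tinv_def)

lemma T_less_iff: "T a < T b \<longleftrightarrow> a < b"
  by (metis FF_T fN.FF_less_iff mM.FF_less_iff)

lemma T_le_iff: "T a \<le> T b \<longleftrightarrow> a \<le> b"
  by (meson T_less_iff not_less)

lemma T_le_iff': "T x \<le> y \<longleftrightarrow> x \<le> Tinv y"
  by (metis T_Tinv T_le_iff)

lemma T_less_iff': "y < T x \<longleftrightarrow> Tinv y < x"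
  by (metis T_Tinv T_less_iff)

lemma T_strict_mono: "strict_mono T"
  by (simp add: strict_mono_def T_less_iff)

lemma T_mono: "mono T"
  by (simp add: monoI T_le_iff)

lemma T_meas[measurable]: "T \<in> borel_measurable borel"
  by (rule borel_measurable_mono[OF T_mono])

lemma T_cont: "isCont T x"
proof -
  have "isCont fN.QQ (mM.FF x)"
    using mM.FF_pos[of x] mM.FF_lt1[of x] by (intro fN.QQ_cont)
  then have "isCont (\<lambda>x. fN.QQ (mM.FF x)) x"
    by (rule isCont_o2[OF mM.FF_cont])
  then show ?thesis by (simp add: T_alt[abs_def])
qed


lemma displacement_aux:
  assumes a0: "deriv V x0 < 0" and a1: "deriv V x1 > 0"
  defines "A \<equiv> min (- deriv V x0) (deriv V x1)"
  defines "\<Lambda> \<equiv> \<bar>ln c\<bar> + \<bar>ln C\<bar> + 1"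
  defines "D \<equiv> 2 * \<Lambda> / A + \<bar>x1 - x0\<bar> + 1"
  shows "\<bar>T x - x\<bar> \<le> D"
proof -
  have A: "A > 0" using a0 a1 by (simp add: A_def)
  have Lam: "\<Lambda> > 0" by (simp add: \<Lambda>_def add_nonneg_pos)
  define E where "E = \<Lambda> / A"
  have E: "E > 0" using A Lam by (simp add: E_def)
  have DE: "D \<ge> 2 * E + \<bar>x1 - x0\<bar>" by (simp add: D_def E_def)
  have ec: "exp (- \<Lambda>) < c"
  proof -
    have "- \<Lambda> < ln c" by (simp add: \<Lambda>_def; linarith)
    then have "exp (- \<Lambda>) < exp (ln c)" by simp
    then show ?thesis using c_pos by simp
  qed
  have eC: "C * exp (- \<Lambda>) < 1"
  proof -
    have "ln C < \<Lambda>" by (simp add: \<Lambda>_def; linarith)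
    then have "C < exp \<Lambda>" using C_pos by (metis exp_less_cancel_iff exp_ln)
    then have "C * exp (- \<Lambda>) < exp \<Lambda> * exp (- \<Lambda>)" by simp
    then show ?thesis by (simp add: mult_exp_exp)
  qed
  have e0: "exp (deriv V x0 * s) \<le> exp (- \<Lambda>)" if "s \<ge> E" for s
  proof -
    have "A * E \<le> - deriv V x0 * s"
      using mult_mono[of A "- deriv V x0" E s] that A E by (simp add: A_def)
    moreover have "A * E = \<Lambda>" using A by (simp add: E_def)
    ultimately show ?thesis by simp
  qed
  have e1: "exp (- deriv V x1 * s) \<le> exp (- \<Lambda>)" if "s \<ge> E" for s
  proof -
    have "A * E \<le> deriv V x1 * s"
      using mult_mono[of A "deriv V x1" E s] that A E by (simp add: A_def)
    moreover have "A * E = \<Lambda>" using A by (simp add: E_def)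
    ultimately show ?thesis by simp
  qed
  define y where "y = T x"
  have Fy: "fN.FF y = mM.FF x" by (simp add: y_def)
  have r1: "mM.FF x \<le> C * mM.FF y" using Ff_upper[of y] Fy by simp
  have r2: "c * (1 - mM.FF y) \<le> 1 - mM.FF x" using Sf_lower[of y] Fy by simp
  have r3: "c * mM.FF y \<le> mM.FF x" using Ff_lower[of y] Fy by simp
  have r4: "1 - mM.FF x \<le> C * (1 - mM.FF y)" using Sf_upper[of y] Fy by simp
  have Sy: "0 < 1 - mM.FF z" for z using mM.FF_lt1[of z] by simp
  have lower: "y \<ge> x - D"
  proof (rule ccontr)
    assume "\<not> ?thesis"
    then have yx: "x - y > D" by simp
    consider "y \<ge> x1" | "y \<le> x0 - E" | "x0 - E < y" "y < x1" by linarith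
    then show False
    proof cases
      case 1
      have "1 - mM.FF x \<le> exp (- deriv V x1 * (x - y)) * (1 - mM.FF y)"
        using tailB[of x1 y x] 1 yx DE E by (simp add: less_imp_le)
      also have "\<dots> \<le> exp (- \<Lambda>) * (1 - mM.FF y)"
        using e1[of "x - y"] yx DE E Sy[of y] by (intro mult_right_mono) (auto simp: less_imp_le)
      also have "\<dots> < c * (1 - mM.FF y)"
        using ec Sy[of y] by (intro mult_strict_right_mono) auto
      finally show False using r2 by simp
    next
      case 2
      define w where "w = min x x0"
      have wy: "w - y \<ge> E" using 2 yx DE E by (simp add: w_def; linarith)
      have "mM.FF y \<le> exp (deriv V x0 * (w - y)) * mM.FF w"
        using tailA[of y w x0] wy E by (simp add: w_def; linarith)
      also have "\<dots> \<le> exp (- \<Lambda>) * mM.FF x"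
        using e0[OF wy] mM.FF_mono[of w x] mM.FF_pos[of w]
        by (intro mult_mono) (auto simp: w_def less_imp_le)
      finally have "C * mM.FF y \<le> C * exp (- \<Lambda>) * mM.FF x"
        using C_pos by (simp add: mult_left_mono)
      also have "\<dots> < mM.FF x" using eC mM.FF_pos[of x] by simp
      finally show False using r1 by simp
    next
      case 3
      have "c * (1 - mM.FF x1) \<le> c * (1 - mM.FF y)"
        using mM.FF_mono[of y x1] 3 c_pos by simp
      with r2 have low: "c * (1 - mM.FF x1) \<le> 1 - mM.FF x" by simp
      have "x \<le> x1 + E"
      proof (rule ccontr)
        assume "\<not> ?thesis"
        then have "1 - mM.FF x \<le> exp (- deriv V x1 * (x - x1)) * (1 - mM.FF x1)"
          using tailB[of x1 x1 x] E by simp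
        also have "\<dots> \<le> exp (- \<Lambda>) * (1 - mM.FF x1)"
          using e1[of "x - x1"] \<open>\<not> x \<le> x1 + E\<close> Sy[of x1] by (intro mult_right_mono) auto
        also have "\<dots> < c * (1 - mM.FF x1)"
          using ec Sy[of x1] by (intro mult_strict_right_mono) auto
        finally show False using low by simp
      qed
      then show False using 3 yx DE by linarith
    qed
  qed
  have upper: "y \<le> x + D"
  proof (rule ccontr)
    assume "\<not> ?thesis"
    then have yx: "y - x > D" by simp
    consider "y \<le> x0" | "y \<ge> x1 + E" | "x0 < y" "y < x1 + E" by linarith
    then show False
    proof cases
      case 1
      have "mM.FF x \<le> exp (deriv V x0 * (y - x)) * mM.FF y"
        using tailA[of x y x0] 1 yx DE E by (simp add: less_imp_le)
      also have "\<dots> \<le> exp (- \<Lambda>) * mM.FF y"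
        using e0[of "y - x"] yx DE E mM.FF_pos[of y] by (intro mult_right_mono) (auto simp: less_imp_le)
      also have "\<dots> < c * mM.FF y"
        using ec mM.FF_pos[of y] by (intro mult_strict_right_mono) auto
      finally show False using r3 by simp
    next
      case 2
      define w where "w = max x x1"
      have wy: "y - w \<ge> E" using 2 yx DE E by (simp add: w_def; linarith)
      have "1 - mM.FF y \<le> exp (- deriv V x1 * (y - w)) * (1 - mM.FF w)"
        using tailB[of x1 w y] wy E by (simp add: w_def; linarith)
      also have "\<dots> \<le> exp (- \<Lambda>) * (1 - mM.FF x)"
        using e1[OF wy] mM.FF_mono[of x w] Sy[of w]
        by (intro mult_mono) (auto simp: w_def less_imp_le)
      finally have "C * (1 - mM.FF y) \<le> C * exp (- \<Lambda>) * (1 - mM.FF x)"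
        using C_pos by (simp add: mult_left_mono)
      also have "\<dots> < 1 - mM.FF x" using eC Sy[of x] by simp
      finally show False using r4 by simp
    next
      case 3
      have "c * mM.FF x0 \<le> c * mM.FF y"
        using mM.FF_mono[of x0 y] 3 c_pos by simp
      with r3 have low: "c * mM.FF x0 \<le> mM.FF x" by simp
      have "x \<ge> x0 - E"
      proof (rule ccontr)
        assume "\<not> ?thesis"
        then have "mM.FF x \<le> exp (deriv V x0 * (x0 - x)) * mM.FF x0"
          using tailA[of x x0 x0] E by simp
        also have "\<dots> \<le> exp (- \<Lambda>) * mM.FF x0"
          using e0[of "x0 - x"] \<open>\<not> x \<ge> x0 - E\<close> mM.FF_pos[of x0] by (intro mult_right_mono) auto
        also have "\<dots> < c * mM.FF x0"
          using ec mM.FF_pos[of x0] by (intro mult_strict_right_mono) auto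
        finally show False using low by simp
      qed
      then show False using 3 yx DE by linarith
    qed
  qed
  show ?thesis using lower upper by (simp add: y_def abs_le_iff)
qed

lemma displacement: "\<exists>D\<ge>0. \<forall>x. \<bar>T x - x\<bar> \<le> D"
proof -
  obtain x0 where a0: "deriv V x0 < 0" using ex_neg by blast
  obtain x1 where a1: "deriv V x1 > 0" using ex_pos by blast
  from displacement_aux[OF a0 a1] show ?thesis
    by (intro exI[of _ "2 * (\<bar>ln c\<bar> + \<bar>ln C\<bar> + 1) / min (- deriv V x0) (deriv V x1) + \<bar>x1 - x0\<bar> + 1"])
       (use a0 a1 in auto)
qed

end

lemma distr_lborel_jac:
  fixes K k :: "real \<Rightarrow> real"
  assumes K: "strict_mono K" "surj K"
    and k[measurable]: "k \<in> borel_measurable borel" and k0: "\<And>x. 0 \<le> k x"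
    and jac: "\<And>a b. a \<le> b \<Longrightarrow> (\<integral>\<^sup>+x. ennreal (k x) * indicator {a<..<b} x \<partial>lborel) = ennreal (K b - K a)"
  shows "distr (density lborel (\<lambda>x. ennreal (k x))) lborel K = lborel"
proof -
  have Km[measurable]: "K \<in> borel_measurable borel"
    using K(1) by (intro borel_measurable_mono) (simp add: strict_mono_mono)
  have KK: "K (inv K y) = y" for y using K(2) by (simp add: surj_f_inv_f)
  have pre: "K -` {l<..<u} = {inv K l<..<inv K u}" for l u
  proof -
    have "l < K x \<longleftrightarrow> inv K l < x" for x
      using strict_mono_less[OF K(1), of "inv K l" x] KK[of l] by simp
    moreover have "K x < u \<longleftrightarrow> x < inv K u" for x
      using strict_mono_less[OF K(1), of x "inv K u"] KK[of u] by simp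
    ultimately show ?thesis by auto
  qed
  have inv_le: "inv K l \<le> inv K u" if "l \<le> u" for l u
    using that KK[of l] KK[of u] strict_mono_less_eq[OF K(1), of "inv K l" "inv K u"] by simp
  show ?thesis
  proof (rule lborel_eqI[symmetric])
    fix l u :: real
    assume "\<And>b. b \<in> Basis \<Longrightarrow> l \<bullet> b \<le> u \<bullet> b"
    then have lu: "l \<le> u" by simp
    have "emeasure (distr (density lborel (\<lambda>x. ennreal (k x))) lborel K) (box l u)
        = emeasure (density lborel (\<lambda>x. ennreal (k x))) (K -` {l<..<u})"
      by (subst emeasure_distr) auto
    also have "\<dots> = (\<integral>\<^sup>+x. ennreal (k x) * indicator {inv K l<..<inv K u} x \<partial>lborel)"
      by (simp add: pre emeasure_density)
    also have "\<dots> = ennreal (u - l)"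
      using jac[OF inv_le[OF lu]] by (simp add: KK)
    finally show "emeasure (distr (density lborel (\<lambda>x. ennreal (k x))) lborel K) (box l u) = (\<Prod>b\<in>Basis. (u - l) \<bullet> b)"
      by simp
  qed simp
qed

lemma nn_integral_jac:
  fixes K k :: "real \<Rightarrow> real"
  assumes K: "strict_mono K" "surj K"
    and k[measurable]: "k \<in> borel_measurable borel" and k0: "\<And>x. 0 \<le> k x"
    and jac: "\<And>a b. a \<le> b \<Longrightarrow> (\<integral>\<^sup>+x. ennreal (k x) * indicator {a<..<b} x \<partial>lborel) = ennreal (K b - K a)"
    and g[measurable]: "g \<in> borel_measurable borel"
  shows "(\<integral>\<^sup>+y. g y \<partial>lborel) = (\<integral>\<^sup>+x. ennreal (k x) * g (K x) \<partial>lborel)"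
proof -
  have Km[measurable]: "K \<in> borel_measurable borel"
    using K(1) by (intro borel_measurable_mono) (simp add: strict_mono_mono)
  have "(\<integral>\<^sup>+y. g y \<partial>lborel) = (\<integral>\<^sup>+y. g y \<partial>distr (density lborel (\<lambda>x. ennreal (k x))) lborel K)"
    by (simp add: distr_lborel_jac[OF K k k0 jac])
  also have "\<dots> = (\<integral>\<^sup>+x. g (K x) \<partial>density lborel (\<lambda>x. ennreal (k x)))"
    by (subst nn_integral_distr) auto
  also have "\<dots> = (\<integral>\<^sup>+x. ennreal (k x) * g (K x) \<partial>lborel)"
    by (subst nn_integral_density) auto
  finally show ?thesis .
qed

context fset
begin

lemma distr_T: "distr mM.HH lborel T = fN.HH"
proof -
  have "distr mM.HH lborel T = distr mM.HH borel T"
    by (rule distr_cong) auto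
  also have "\<dots> = fN.HH"
  proof (rule cdf_unique)
    show "real_distribution (distr mM.HH borel T)"
      by (rule mM.HH.real_distribution_distr) simp
    show "real_distribution fN.HH" by (rule fN.real_distr_HH)
    show "cdf (distr mM.HH borel T) = cdf fN.HH"
    proof
      fix y
      have "T -` {..y} = {..Tinv y}" by (auto simp: T_le_iff')
      then have "cdf (distr mM.HH borel T) y = mM.FF (Tinv y)"
        by (simp add: cdf_def measure_distr mM.FF_def)
      also have "\<dots> = fN.FF y" by (metis FF_T T_Tinv)
      finally show "cdf (distr mM.HH borel T) y = cdf fN.HH y" by (simp add: fN.FF_def)
    qed
  qed
  finally show ?thesis .
qed

definition "jj x = m x / f (T x)"

lemma jj_pos: "0 < jj x" by (simp add: jj_def m_pos f_pos)

lemma jj_meas[measurable]: "jj \<in> borel_measurable borel"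
  unfolding jj_def by measurable

lemma jac1: assumes "a \<le> b"
  shows "(\<integral>\<^sup>+x. ennreal (jj x) * indicator {a<..<b} x \<partial>lborel) = ennreal (T b - T a)"
proof -
  have "(\<integral>\<^sup>+x. ennreal (jj x) * indicator {a<..<b} x \<partial>lborel)
      = (\<integral>\<^sup>+x. ennreal (m x) * (ennreal (1 / f (T x)) * indicator {T a<..<T b} (T x)) \<partial>lborel)"
    by (intro nn_integral_cong)
       (auto simp: jj_def indicator_def T_less_iff ennreal_mult'[symmetric] m_pos f_pos less_imp_le)
  also have "\<dots> = (\<integral>\<^sup>+x. ennreal (1 / f (T x)) * indicator {T a<..<T b} (T x) \<partial>mM.HH)"
    by (simp add: mM.HH_def nn_integral_density)
  also have "\<dots> = (\<integral>\<^sup>+y. ennreal (1 / f y) * indicator {T a<..<T b} y \<partial>distr mM.HH lborel T)"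
    by (subst nn_integral_distr) auto
  also have "\<dots> = (\<integral>\<^sup>+y. ennreal (f y) * (ennreal (1 / f y) * indicator {T a<..<T b} y) \<partial>lborel)"
    by (simp add: distr_T fN.HH_def nn_integral_density)
  also have "\<dots> = (\<integral>\<^sup>+y. indicator {T a<..<T b} y \<partial>lborel)"
    by (intro nn_integral_cong)
       (auto simp: indicator_def ennreal_mult'[symmetric] f_pos less_imp_le f_pos[THEN less_imp_neq, symmetric])
  also have "\<dots> = ennreal (T b - T a)"
    using assms by (simp add: T_le_iff)
  finally show ?thesis .
qed

definition "Tt t x = (1 - t) * x + t * T x"
definition "JJ t x = (1 - t) + t * jj x"

lemma JJ_pos: assumes "0 \<le> t" "t \<le> 1" shows "0 < JJ t x"
proof (cases "t = 1")
  case True then show ?thesis using jj_pos by (simp add: JJ_def)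
next
  case False
  then have "0 < 1 - t" using assms by simp
  moreover have "0 \<le> t * jj x" using assms jj_pos by (simp add: less_imp_le)
  ultimately show ?thesis by (simp add: JJ_def)
qed

lemma JJ_meas[measurable]: "JJ t \<in> borel_measurable borel"
  unfolding JJ_def by measurable

lemma Tt_strict: assumes "0 \<le> t" "t \<le> 1" "a < b" shows "Tt t a < Tt t b"
proof (cases "t = 0")
  case True then show ?thesis using assms by (simp add: Tt_def)
next
  case False
  then have "t * T a < t * T b" using assms T_less_iff by simp
  moreover have "(1 - t) * a \<le> (1 - t) * b" using assms by (intro mult_left_mono) auto
  ultimately show ?thesis by (simp add: Tt_def)
qed

lemma Tt_strict_mono: assumes "0 \<le> t" "t \<le> 1" shows "strict_mono (Tt t)"
  using Tt_strict[OF assms] by (simp add: strict_mono_def)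

lemma Tt_cont: "isCont (Tt t) x"
  unfolding Tt_def[abs_def] by (intro continuous_intros T_cont)

lemma Tt_surj: assumes "0 \<le> t" "t \<le> 1" shows "surj (Tt t)"
proof -
  obtain D where D: "D \<ge> 0" "\<And>x. \<bar>T x - x\<bar> \<le> D" using displacement by blast
  have bnd: "\<bar>Tt t x - x\<bar> \<le> D" for x
  proof -
    have "Tt t x - x = t * (T x - x)" by (simp add: Tt_def algebra_simps)
    then have "\<bar>Tt t x - x\<bar> = t * \<bar>T x - x\<bar>" using assms by (simp add: abs_mult)
    also have "\<dots> \<le> 1 * D" using assms D(2)[of x] D(1) by (intro mult_mono) auto
    finally show ?thesis by simp
  qed
  have "\<exists>x. Tt t x = y" for y
  proof -
    have "Tt t (y - D) \<le> y" using bnd[of "y - D"] by (simp add: abs_le_iff)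
    moreover have "y \<le> Tt t (y + D)" using bnd[of "y + D"] by (simp add: abs_le_iff)
    moreover have "continuous_on {y - D..y + D} (Tt t)"
      using Tt_cont by (simp add: continuous_at_imp_continuous_on)
    ultimately show ?thesis using IVT'[of "Tt t" "y - D" y "y + D"] D(1) by auto
  qed
  then show ?thesis by (metis surjI)
qed

lemma jacT: assumes "0 \<le> t" "t \<le> 1" "a \<le> b"
  shows "(\<integral>\<^sup>+x. ennreal (JJ t x) * indicator {a<..<b} x \<partial>lborel) = ennreal (Tt t b - Tt t a)"
proof -
  have "(\<integral>\<^sup>+x. ennreal (JJ t x) * indicator {a<..<b} x \<partial>lborel)
      = (\<integral>\<^sup>+x. ennreal (1 - t) * indicator {a<..<b} x + ennreal t * (ennreal (jj x) * indicator {a<..<b} x) \<partial>lborel)"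
    using assms jj_pos
    by (intro nn_integral_cong)
       (auto simp: JJ_def indicator_def ennreal_mult'[symmetric] ennreal_plus[symmetric] less_imp_le simp del: ennreal_plus)
  also have "\<dots> = ennreal (1 - t) * ennreal (b - a) + ennreal t * ennreal (T b - T a)"
    using assms by (subst nn_integral_add) (auto simp: nn_integral_cmult jac1)
  also have "\<dots> = ennreal ((1 - t) * (b - a)) + ennreal (t * (T b - T a))"
    using assms by (simp add: ennreal_mult'[symmetric])
  also have "\<dots> = ennreal ((1 - t) * (b - a) + t * (T b - T a))"
    using assms T_le_iff[of a b] by (intro ennreal_plus[symmetric]) auto
  also have "\<dots> = ennreal (Tt t b - Tt t a)"
    by (simp add: Tt_def algebra_simps)
  finally show ?thesis .
qed


definition "Ti t = inv (Tt t)"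

lemma Tt_Ti[simp]: assumes "0 \<le> t" "t \<le> 1" shows "Tt t (Ti t y) = y"
  using Tt_surj[OF assms] by (simp add: Ti_def surj_f_inv_f)

lemma Ti_Tt[simp]: assumes "0 \<le> t" "t \<le> 1" shows "Ti t (Tt t x) = x"
  using strict_mono_imp_inj_on[OF Tt_strict_mono[OF assms]] by (simp add: Ti_def inv_f_f)

lemma Ti_mono: assumes "0 \<le> t" "t \<le> 1" shows "mono (Ti t)"
proof
  fix a b :: real assume "a \<le> b"
  then show "Ti t a \<le> Ti t b"
    using strict_mono_less_eq[OF Tt_strict_mono[OF assms], of "Ti t a" "Ti t b"] assms by simp
qed

definition "gt t y = m (Ti t y) / JJ t (Ti t y)"

lemma gt_pos: assumes "0 \<le> t" "t \<le> 1" shows "0 < gt t y"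
  using JJ_pos[OF assms] m_pos by (simp add: gt_def)

lemma gt_meas: assumes "0 \<le> t" "t \<le> 1" shows "gt t \<in> borel_measurable borel"
proof -
  have [measurable]: "Ti t \<in> borel_measurable borel" by (rule borel_measurable_mono[OF Ti_mono[OF assms]])
  show ?thesis unfolding gt_def[abs_def] by measurable
qed

lemma gt_Tt: assumes "0 \<le> t" "t \<le> 1" shows "gt t (Tt t x) = m x / JJ t x"
  using assms by (simp add: gt_def)

lemma jacT_integral:
  assumes "0 \<le> t" "t \<le> 1" and g[measurable]: "g \<in> borel_measurable borel"
  shows "(\<integral>\<^sup>+y. g y \<partial>lborel) = (\<integral>\<^sup>+x. ennreal (JJ t x) * g (Tt t x) \<partial>lborel)"
  by (rule nn_integral_jac[OF Tt_strict_mono[OF assms(1,2)] Tt_surj[OF assms(1,2)] JJ_meas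
        less_imp_le[OF JJ_pos[OF assms(1,2)]] jacT[OF assms(1,2)] g])

lemma Tt_meas[measurable]: "Tt t \<in> borel_measurable borel"
  unfolding Tt_def[abs_def] by measurable

lemma mu_eq: assumes t: "0 \<le> t" "t \<le> 1"
  shows "distr mM.HH lborel (Tt t) = density lborel (\<lambda>y. ennreal (gt t y))"
proof (rule measure_eqI)
  show "sets (distr mM.HH lborel (Tt t)) = sets (density lborel (\<lambda>y. ennreal (gt t y)))" by simp
next
  fix A assume "A \<in> sets (distr mM.HH lborel (Tt t))"
  then have A[measurable]: "A \<in> sets borel" by simp
  have [measurable]: "gt t \<in> borel_measurable borel" by (rule gt_meas[OF t])
  have "emeasure (distr mM.HH lborel (Tt t)) A = emeasure mM.HH (Tt t -` A)"
    by (subst emeasure_distr) auto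
  also have "\<dots> = (\<integral>\<^sup>+x. ennreal (m x) * indicator A (Tt t x) \<partial>lborel)"
    using measurable_sets_borel[OF Tt_meas A]
    by (subst mM.emeasure_HH) (auto intro!: nn_integral_cong simp: indicator_def)
  also have "\<dots> = (\<integral>\<^sup>+x. ennreal (JJ t x) * (ennreal (gt t (Tt t x)) * indicator A (Tt t x)) \<partial>lborel)"
    using JJ_pos[OF t] m_pos
    by (intro nn_integral_cong) (simp add: gt_Tt[OF t] ennreal_mult'[symmetric] less_imp_le mult.assoc[symmetric]
        JJ_pos[OF t, THEN less_imp_neq, symmetric])
  also have "\<dots> = (\<integral>\<^sup>+y. ennreal (gt t y) * indicator A y \<partial>lborel)"
    by (rule jacT_integral[OF t, symmetric]) measurable
  also have "\<dots> = emeasure (density lborel (\<lambda>y. ennreal (gt t y))) A"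
    by (simp add: emeasure_density)
  finally show "emeasure (distr mM.HH lborel (Tt t)) A = emeasure (density lborel (\<lambda>y. ennreal (gt t y))) A" .
qed

lemma Frho_mu:
  assumes t: "0 \<le> t" "t \<le> 1" and rho[measurable]: "\<rho> \<in> borel_measurable borel"
  shows "Frho r \<rho> (distr mM.HH lborel (Tt t))
       = (\<integral>\<^sup>+x. ennreal (JJ t x * (\<rho> (Tt t x) / (m x / JJ t x) powr r)) \<partial>lborel)"
proof -
  have [measurable]: "gt t \<in> borel_measurable borel" by (rule gt_meas[OF t])
  define \<mu> where "\<mu> = distr mM.HH lborel (Tt t)"
  have isd: "is_density \<mu> (gt t)"
    using gt_pos[OF t] by (auto simp: is_density_def \<mu>_def mu_eq[OF t] less_imp_le)
  define g0 where "g0 = Eps (is_density \<mu>)"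
  have g0: "is_density \<mu> g0" unfolding g0_def by (rule someI[of "\<lambda>g. is_density \<mu> g", OF isd])
  have [measurable]: "g0 \<in> borel_measurable borel" using g0 by (simp add: is_density_def)
  have "density lborel (\<lambda>x. ennreal (g0 x)) = density lborel (\<lambda>x. ennreal (gt t x))"
    using g0 isd by (simp add: is_density_def)
  then have "AE x in lborel. ennreal (g0 x) = ennreal (gt t x)"
    by (intro sigma_finite_measure.density_unique[OF sigma_finite_lborel]) auto
  then have ae: "AE x in lborel. g0 x = gt t x"
    by (rule eventually_mono) (use g0 gt_pos[OF t] in \<open>auto simp: is_density_def less_imp_le\<close>)
  have "Frho r \<rho> \<mu> = (\<integral>\<^sup>+x. (if 0 < g0 x then ennreal (\<rho> x / g0 x powr r) else \<infinity>) \<partial>lborel)"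
  proof -
    have ex: "\<exists>g. is_density \<mu> g" using isd by blast
    show ?thesis unfolding Frho_def using ex by (simp add: g0_def[symmetric] Let_def)
  qed
  also have "\<dots> = (\<integral>\<^sup>+y. ennreal (\<rho> y / gt t y powr r) \<partial>lborel)"
    using ae gt_pos[OF t] by (intro nn_integral_cong_AE) (auto elim!: eventually_mono)
  also have "\<dots> = (\<integral>\<^sup>+x. ennreal (JJ t x) * ennreal (\<rho> (Tt t x) / gt t (Tt t x) powr r) \<partial>lborel)"
    by (rule jacT_integral[OF t]) measurable
  also have "\<dots> = (\<integral>\<^sup>+x. ennreal (JJ t x * (\<rho> (Tt t x) / (m x / JJ t x) powr r)) \<partial>lborel)"
    using JJ_pos[OF t]
    by (intro nn_integral_cong) (simp add: gt_Tt[OF t] ennreal_mult'[symmetric] less_imp_le[OF JJ_pos[OF t]])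
  finally show ?thesis by (simp add: \<mu>_def)
qed

lemma Tt0: "Tt 0 = (\<lambda>x. x)" by (simp add: Tt_def[abs_def])
lemma Tt1: "Tt 1 = T" by (simp add: Tt_def[abs_def])

lemma mu0: "distr mM.HH lborel (Tt 0) = mM.HH"
  by (simp add: Tt0 distr_id2)

lemma mu1: "distr mM.HH lborel (Tt 1) = fN.HH"
  by (simp add: Tt1 distr_T)

end

lemma emeasure_lborel_Ioo_gen: "emeasure lborel {l<..<u::real} = ennreal (u - l)"
proof (cases "l \<le> u")
  case False
  then have "{l<..<u} = {}" by auto
  then show ?thesis using False by (simp add: ennreal_eq_0_iff)
qed simp

definition Hh :: "real \<Rightarrow> real \<Rightarrow> ennreal" where
  "Hh x y = (\<integral>\<^sup>+s. ennreal (y - s) * indicator {x..} s \<partial>lborel)"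

lemma Hh_eq: "Hh x y = ennreal ((max 0 (y - x))\<^sup>2 / 2)"
proof (cases "x < y")
  case False
  have "Hh x y = (\<integral>\<^sup>+s. 0 \<partial>(lborel :: real measure))"
    unfolding Hh_def using False
    by (intro nn_integral_cong) (auto simp: indicator_def ennreal_eq_0_iff)
  then show ?thesis using False by simp
next
  case True
  have "Hh x y = (\<integral>\<^sup>+s. ennreal (y - s) * indicator {x..y} s \<partial>lborel)"
    unfolding Hh_def
    by (intro nn_integral_cong) (auto simp: indicator_def ennreal_eq_0_iff)
  also have "\<dots> = ennreal ((y - x)\<^sup>2 / 2)"
  proof (rule nn_integral_has_integral_lebesgue')
    show "0 \<le> y - s" if "s \<in> {x..y}" for s using that by simp
    have "((\<lambda>s. y - s) has_integral ((\<lambda>s. - (y - s)\<^sup>2 / 2) y - (\<lambda>s. - (y - s)\<^sup>2 / 2) x)) {x..y}"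
      using True
      by (intro fundamental_theorem_of_calculus)
         (auto intro!: derivative_eq_intros simp: has_real_derivative_iff_has_vector_derivative[symmetric]
               power2_eq_square field_simps)
    then show "((\<lambda>s. y - s) has_integral (y - x)\<^sup>2 / 2) {x..y}" by simp
  qed
  finally show ?thesis using True by simp
qed

definition Gq :: "real \<times> real \<Rightarrow> real \<times> real \<Rightarrow> ennreal" where
  "Gq p q = indicator {p. fst p \<le> fst q \<and> fst q < snd q \<and> snd q < snd p} p
          + indicator {p. snd p \<le> fst q \<and> fst q < snd q \<and> snd q < fst p} p"

lemma Gq_meas[measurable]:
  "(\<lambda>(p, q). Gq p q) \<in> borel_measurable ((borel \<Otimes>\<^sub>M borel) \<Otimes>\<^sub>M (lborel \<Otimes>\<^sub>M lborel))"
  unfolding Gq_def by measurable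

lemma sq_repr: "ennreal ((x - y)\<^sup>2) = 2 * (\<integral>\<^sup>+q. Gq (x, y) q \<partial>(lborel \<Otimes>\<^sub>M lborel))"
proof -
  have inner: "(\<integral>\<^sup>+u. Gq (x, y) (s, u) \<partial>lborel)
      = ennreal (y - s) * indicator {x..} s + ennreal (x - s) * indicator {y..} s" for s
  proof -
    have "(\<integral>\<^sup>+u. Gq (x, y) (s, u) \<partial>lborel)
        = (\<integral>\<^sup>+u. indicator {x..} s * indicator {s<..<y} u + indicator {y..} s * indicator {s<..<x} u \<partial>lborel)"
      by (intro nn_integral_cong) (auto simp: Gq_def indicator_def)
    also have "\<dots> = ennreal (y - s) * indicator {x..} s + ennreal (x - s) * indicator {y..} s"
      by (subst nn_integral_add) (auto simp: nn_integral_cmult emeasure_lborel_Ioo_gen mult.commute)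
    finally show ?thesis .
  qed
  have "(\<integral>\<^sup>+q. Gq (x, y) q \<partial>(lborel \<Otimes>\<^sub>M lborel)) = (\<integral>\<^sup>+s. \<integral>\<^sup>+u. Gq (x, y) (s, u) \<partial>lborel \<partial>lborel)"
    by (rule lborel.nn_integral_fst[symmetric]) (unfold Gq_def, measurable)
  also have "\<dots> = (\<integral>\<^sup>+s. ennreal (y - s) * indicator {x..} s + ennreal (x - s) * indicator {y..} s \<partial>lborel)"
    by (simp add: inner)
  also have "\<dots> = Hh x y + Hh y x"
    by (subst nn_integral_add) (auto simp: Hh_def)
  also have "\<dots> = ennreal ((max 0 (y - x))\<^sup>2 / 2 + (max 0 (x - y))\<^sup>2 / 2)"
    by (simp add: Hh_eq ennreal_plus[symmetric] del: ennreal_plus)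
  finally have "2 * (\<integral>\<^sup>+q. Gq (x, y) q \<partial>(lborel \<Otimes>\<^sub>M lborel))
      = ennreal 2 * ennreal ((max 0 (y - x))\<^sup>2 / 2 + (max 0 (x - y))\<^sup>2 / 2)" by simp
  also have "\<dots> = ennreal ((x - y)\<^sup>2)"
    by (subst ennreal_mult'[symmetric]) (auto simp: max_def power2_eq_square algebra_simps)
  finally show ?thesis by simp
qed

lemma coupling_repr:
  assumes P: "prob_space P" and sP: "sets P = sets (borel \<Otimes>\<^sub>M borel)"
  shows "(\<integral>\<^sup>+p. ennreal ((fst p - snd p)\<^sup>2) \<partial>P)
       = 2 * (\<integral>\<^sup>+q. (\<integral>\<^sup>+p. Gq p q \<partial>P) \<partial>(lborel \<Otimes>\<^sub>M lborel))"
proof -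
  interpret P: prob_space P by (rule P)
  have [measurable_cong]: "sets P = sets (borel \<Otimes>\<^sub>M borel)" by (rule sP)
  have sf: "sigma_finite_measure (lborel \<Otimes>\<^sub>M lborel :: (real \<times> real) measure)"
    by (simp add: lborel_prod sigma_finite_lborel)
  interpret PQ: pair_sigma_finite P "lborel \<Otimes>\<^sub>M lborel :: (real \<times> real) measure"
    by (simp add: pair_sigma_finite_def P.sigma_finite_measure_axioms lborel_prod sigma_finite_lborel)
  have "(\<integral>\<^sup>+p. ennreal ((fst p - snd p)\<^sup>2) \<partial>P) = (\<integral>\<^sup>+p. 2 * (\<integral>\<^sup>+q. Gq p q \<partial>(lborel \<Otimes>\<^sub>M lborel)) \<partial>P)"
    using sq_repr by (intro nn_integral_cong) (metis prod.collapse)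
  also have "\<dots> = 2 * (\<integral>\<^sup>+p. (\<integral>\<^sup>+q. Gq p q \<partial>(lborel \<Otimes>\<^sub>M lborel)) \<partial>P)"
  proof (rule nn_integral_cmult)
    have m: "(\<lambda>(p, q). Gq p q) \<in> borel_measurable (P \<Otimes>\<^sub>M (lborel \<Otimes>\<^sub>M lborel))"
      by (subst measurable_cong_sets[OF sets_pair_measure_cong[OF sP refl] refl]) (rule Gq_meas)
    show "(\<lambda>p. \<integral>\<^sup>+q. Gq p q \<partial>(lborel \<Otimes>\<^sub>M lborel)) \<in> borel_measurable P"
      using sigma_finite_measure.borel_measurable_nn_integral[OF sf m] by simp
  qed
  also have "(\<integral>\<^sup>+p. (\<integral>\<^sup>+q. Gq p q \<partial>(lborel \<Otimes>\<^sub>M lborel)) \<partial>P)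
      = (\<integral>\<^sup>+q. (\<integral>\<^sup>+p. Gq p q \<partial>P) \<partial>(lborel \<Otimes>\<^sub>M lborel))"
  proof (rule PQ.Fubini'[symmetric])
    show "(\<lambda>(p, q). Gq p q) \<in> borel_measurable (P \<Otimes>\<^sub>M (lborel \<Otimes>\<^sub>M lborel))"
      by (subst measurable_cong_sets[OF sets_pair_measure_cong[OF sP refl] refl]) (rule Gq_meas)
  qed
  finally show ?thesis .
qed


context fset
begin

definition "pistar = distr mM.HH (borel \<Otimes>\<^sub>M borel) (\<lambda>x. (x, T x))"

lemma sets_pistar: "sets pistar = sets (borel \<Otimes>\<^sub>M borel)"
  by (simp add: pistar_def)

lemma prob_pistar: "prob_space pistar"
  unfolding pistar_def by (rule mM.HH.prob_space_distr) measurable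

lemma pistar_sq: "(\<integral>\<^sup>+x. ennreal ((x - T x)\<^sup>2) \<partial>mM.HH) = (\<integral>\<^sup>+p. ennreal ((fst p - snd p)\<^sup>2) \<partial>pistar)"
  unfolding pistar_def by (subst nn_integral_distr) auto

lemma Gq_split: "s < u \<Longrightarrow> Gq p (s, u) = indicator {p. fst p \<le> s \<and> u < snd p} p + indicator {p. snd p \<le> s \<and> u < fst p} p"
  by (simp add: Gq_def indicator_def)

lemma Gq_zero: "\<not> s < u \<Longrightarrow> Gq p (s, u) = 0"
  by (simp add: Gq_def indicator_def)

lemma Ff_Tinv: "mM.FF (Tinv u) = fN.FF u"
  by (metis FF_T T_Tinv)

lemma inner_cmp:
  assumes pi: "\<pi> \<in> couplings mM.HH fN.HH"
  shows "(\<integral>\<^sup>+p. Gq p q \<partial>pistar) \<le> (\<integral>\<^sup>+p. Gq p q \<partial>\<pi>)"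
proof -
  obtain s u where q: "q = (s, u)" by (cases q)
  from pi have P: "prob_space \<pi>" and sP: "sets \<pi> = sets (borel :: (real \<times> real) measure)"
    and m1: "distr \<pi> borel fst = mM.HH" and m2: "distr \<pi> borel snd = fN.HH"
    by (auto simp: couplings_def)
  interpret P: prob_space \<pi> by (rule P)
  interpret Q: prob_space pistar by (rule prob_pistar)
  have sP'[measurable_cong]: "sets \<pi> = sets (borel \<Otimes>\<^sub>M borel)" unfolding borel_prod by (rule sP)
  have sQ[measurable_cong]: "sets pistar = sets (borel \<Otimes>\<^sub>M borel)" by (rule sets_pistar)
  have spP: "space \<pi> = UNIV" using sets_eq_imp_space_eq[OF sP] by simp
  have ev1: "{p::real\<times>real. fst p \<le> a} \<in> sets \<pi>" for a
  proof -
    have "{p::real\<times>real. fst p \<le> a} = {..a} \<times> UNIV" by auto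
    then show ?thesis by (simp add: sP' pair_measureI)
  qed
  have ev2: "{p::real\<times>real. snd p \<le> a} \<in> sets \<pi>" for a
  proof -
    have "{p::real\<times>real. snd p \<le> a} = UNIV \<times> {..a}" by auto
    then show ?thesis by (simp add: sP' pair_measureI)
  qed
  have ev3: "{p::real\<times>real. fst p \<le> a \<and> snd p \<le> b} \<in> sets \<pi>" for a b
  proof -
    have "{p::real\<times>real. fst p \<le> a \<and> snd p \<le> b} = {..a} \<times> {..b}" by auto
    then show ?thesis by (simp add: sP' pair_measureI)
  qed
  have ev4: "{p::real\<times>real. snd p \<le> a \<and> fst p \<le> b} \<in> sets \<pi>" for a b
  proof -
    have "{p::real\<times>real. snd p \<le> a \<and> fst p \<le> b} = {..b} \<times> {..a}" by auto
    then show ?thesis by (simp add: sP' pair_measureI)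
  qed
  show ?thesis
  proof (cases "s < u")
    case False then show ?thesis by (simp add: q Gq_zero)
  next
    case True
    define A1 where "A1 = {p::real\<times>real. fst p \<le> s \<and> u < snd p}"
    define A2 where "A2 = {p::real\<times>real. snd p \<le> s \<and> u < fst p}"
    have "A1 = {..s} \<times> {u<..}" by (auto simp: A1_def)
    then have A1m[measurable]: "A1 \<in> sets (borel \<Otimes>\<^sub>M borel)" by (simp add: pair_measureI)
    have "A2 = {u<..} \<times> {..s}" by (auto simp: A2_def)
    then have A2m[measurable]: "A2 \<in> sets (borel \<Otimes>\<^sub>M borel)" by (simp add: pair_measureI)
    have split: "(\<integral>\<^sup>+p. Gq p q \<partial>M) = emeasure M A1 + emeasure M A2"
      if "sets M = sets (borel \<Otimes>\<^sub>M borel)" for M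
    proof -
      have [measurable_cong]: "sets M = sets (borel \<Otimes>\<^sub>M borel)" by (rule that)
      have "(\<integral>\<^sup>+p. Gq p q \<partial>M) = (\<integral>\<^sup>+p. indicator A1 p + indicator A2 p \<partial>M)"
        by (simp add: q Gq_split[OF True] A1_def A2_def)
      also have "\<dots> = emeasure M A1 + emeasure M A2"
        by (subst nn_integral_add) (auto simp: that)
      finally show ?thesis .
    qed
    have pfst: "measure \<pi> {p. fst p \<le> a} = mM.FF a" for a
    proof -
      have "measure \<pi> {p. fst p \<le> a} = measure (distr \<pi> borel fst) {..a}"
        by (subst measure_distr) (auto simp: vimage_def spP)
      then show ?thesis by (simp add: m1 mM.FF_def cdf_def)
    qed
    have psnd: "measure \<pi> {p. snd p \<le> a} = fN.FF a" for a
    proof -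
      have "measure \<pi> {p. snd p \<le> a} = measure (distr \<pi> borel snd) {..a}"
        by (subst measure_distr) (auto simp: vimage_def spP)
      then show ?thesis by (simp add: m2 fN.FF_def cdf_def)
    qed
    have pi1: "measure \<pi> A1 \<ge> mM.FF s - min (mM.FF s) (fN.FF u)"
    proof -
      have "A1 = {p. fst p \<le> s} - {p. fst p \<le> s \<and> snd p \<le> u}" by (auto simp: A1_def)
      then have "measure \<pi> A1 = measure \<pi> {p. fst p \<le> s} - measure \<pi> {p. fst p \<le> s \<and> snd p \<le> u}"
        by (simp add: P.finite_measure_Diff[OF ev1 ev3] subset_eq)
      moreover have "measure \<pi> {p. fst p \<le> s \<and> snd p \<le> u} \<le> measure \<pi> {p. fst p \<le> s}"
        by (intro P.finite_measure_mono) (auto simp: ev1 ev2)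
      moreover have "measure \<pi> {p. fst p \<le> s \<and> snd p \<le> u} \<le> measure \<pi> {p. snd p \<le> u}"
        by (intro P.finite_measure_mono) (auto simp: ev1 ev2)
      ultimately show ?thesis by (simp add: pfst psnd)
    qed
    have pi2: "measure \<pi> A2 \<ge> fN.FF s - min (fN.FF s) (mM.FF u)"
    proof -
      have "A2 = {p. snd p \<le> s} - {p. snd p \<le> s \<and> fst p \<le> u}" by (auto simp: A2_def)
      then have "measure \<pi> A2 = measure \<pi> {p. snd p \<le> s} - measure \<pi> {p. snd p \<le> s \<and> fst p \<le> u}"
        by (simp add: P.finite_measure_Diff[OF ev2 ev4] subset_eq)
      moreover have "measure \<pi> {p. snd p \<le> s \<and> fst p \<le> u} \<le> measure \<pi> {p. snd p \<le> s}"
        by (intro P.finite_measure_mono) (auto simp: ev1 ev2)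
      moreover have "measure \<pi> {p. snd p \<le> s \<and> fst p \<le> u} \<le> measure \<pi> {p. fst p \<le> u}"
        by (intro P.finite_measure_mono) (auto simp: ev1 ev2)
      ultimately show ?thesis by (simp add: pfst psnd)
    qed
    have q1: "measure pistar A1 = mM.FF s - min (mM.FF s) (fN.FF u)"
    proof -
      have "measure pistar A1 = measure mM.HH ((\<lambda>x. (x, T x)) -` A1)"
        unfolding pistar_def by (subst measure_distr) auto
      also have "(\<lambda>x. (x, T x)) -` A1 = {..s} - {..Tinv u}"
        by (auto simp: A1_def T_less_iff')
      also have "measure mM.HH ({..s} - {..Tinv u}) = measure mM.HH {..s} - measure mM.HH ({..s} \<inter> {..Tinv u})"
        by (rule mM.HH.finite_measure_Diff') auto
      also have "{..s} \<inter> {..Tinv u} = {..min s (Tinv u)}" by auto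
      also have "measure mM.HH {..min s (Tinv u)} = min (mM.FF s) (fN.FF u)"
        using mM.FF_mono[of s "Tinv u"] mM.FF_mono[of "Tinv u" s]
        by (auto simp: min_def mM.FF_def cdf_def Ff_Tinv[symmetric])
      finally show ?thesis by (simp add: mM.FF_def cdf_def)
    qed
    have q2: "measure pistar A2 = fN.FF s - min (fN.FF s) (mM.FF u)"
    proof -
      have "measure pistar A2 = measure mM.HH ((\<lambda>x. (x, T x)) -` A2)"
        unfolding pistar_def by (subst measure_distr) auto
      also have "(\<lambda>x. (x, T x)) -` A2 = {..Tinv s} - {..u}"
        by (auto simp: A2_def T_le_iff')
      also have "measure mM.HH ({..Tinv s} - {..u}) = measure mM.HH {..Tinv s} - measure mM.HH ({..Tinv s} \<inter> {..u})"
        by (rule mM.HH.finite_measure_Diff') auto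
      also have "{..Tinv s} \<inter> {..u} = {..min (Tinv s) u}" by auto
      also have "measure mM.HH {..min (Tinv s) u} = min (fN.FF s) (mM.FF u)"
        using mM.FF_mono[of u "Tinv s"] mM.FF_mono[of "Tinv s" u]
        by (auto simp: min_def mM.FF_def cdf_def Ff_Tinv[symmetric])
      finally show ?thesis by (simp add: mM.FF_def cdf_def Ff_Tinv[symmetric])
    qed
    have "(\<integral>\<^sup>+p. Gq p q \<partial>pistar) = ennreal (measure pistar A1) + ennreal (measure pistar A2)"
      by (simp add: split[OF sets_pistar] Q.emeasure_eq_measure)
    also have "\<dots> \<le> ennreal (measure \<pi> A1) + ennreal (measure \<pi> A2)"
      using pi1 pi2 q1 q2 by (intro add_mono ennreal_leI) auto
    also have "\<dots> = (\<integral>\<^sup>+p. Gq p q \<partial>\<pi>)"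
      by (simp add: split[OF sP'] P.emeasure_eq_measure)
    finally show ?thesis .
  qed
qed

lemma W2_lower: "(\<integral>\<^sup>+x. ennreal ((x - T x)\<^sup>2) \<partial>mM.HH) \<le> W2sq mM.HH fN.HH"
  unfolding W2sq_def
proof (rule INF_greatest)
  fix \<pi> assume pi: "\<pi> \<in> couplings mM.HH fN.HH"
  then have P: "prob_space \<pi>" and sP0: "sets \<pi> = sets (borel :: (real \<times> real) measure)"
    unfolding couplings_def by blast+
  have sP: "sets \<pi> = sets (borel \<Otimes>\<^sub>M borel)" using sP0 by (simp only: borel_prod)
  have "(\<integral>\<^sup>+x. ennreal ((x - T x)\<^sup>2) \<partial>mM.HH) = 2 * (\<integral>\<^sup>+q. (\<integral>\<^sup>+p. Gq p q \<partial>pistar) \<partial>(lborel \<Otimes>\<^sub>M lborel))"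
    by (simp add: pistar_sq coupling_repr[OF prob_pistar sets_pistar])
  also have "\<dots> \<le> 2 * (\<integral>\<^sup>+q. (\<integral>\<^sup>+p. Gq p q \<partial>\<pi>) \<partial>(lborel \<Otimes>\<^sub>M lborel))"
  proof -
    have "(\<integral>\<^sup>+q. (\<integral>\<^sup>+p. Gq p q \<partial>pistar) \<partial>(lborel \<Otimes>\<^sub>M lborel)) \<le> (\<integral>\<^sup>+q. (\<integral>\<^sup>+p. Gq p q \<partial>\<pi>) \<partial>(lborel \<Otimes>\<^sub>M lborel))"
      by (rule nn_integral_mono) (rule inner_cmp[OF pi])
    then show ?thesis by (rule mult_left_mono) simp
  qed
  also have "\<dots> = (\<integral>\<^sup>+p. ennreal ((fst p - snd p)\<^sup>2) \<partial>\<pi>)"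
    by (simp add: coupling_repr[OF P sP])
  finally show "(\<integral>\<^sup>+x. ennreal ((x - T x)\<^sup>2) \<partial>mM.HH) \<le> (\<integral>\<^sup>+p. ennreal ((fst p - snd p)\<^sup>2) \<partial>\<pi>)" .
qed

end

lemma exp_semiconcave:
  fixes z Z t :: real
  assumes zZ: "\<bar>z\<bar> \<le> Z" and t: "0 \<le> t" "t \<le> 1"
  shows "exp (t * z) \<ge> (1 - t) + t * exp z - 1 / 2 * t * (1 - t) * z\<^sup>2 * exp Z"
proof -
  define a where "a = exp Z * z\<^sup>2 / 2"
  define g where "g s = a * s\<^sup>2 - exp (s * z)" for s
  define g' where "g' s = 2 * a * s - z * exp (s * z)" for s
  define g'' where "g'' s = 2 * a - z\<^sup>2 * exp (s * z)" for s
  have conv: "convex_on {0..1} g"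
  proof (rule f''_ge0_imp_convex[where f' = g' and f'' = g''])
    show "convex {0..1::real}" by simp
    show "(g has_real_derivative g' s) (at s)" if "s \<in> {0..1}" for s
      unfolding g_def g'_def by (auto intro!: derivative_eq_intros simp: power2_eq_square)
    show "(g' has_real_derivative g'' s) (at s)" if "s \<in> {0..1}" for s
      unfolding g'_def g''_def by (auto intro!: derivative_eq_intros simp: power2_eq_square)
    show "0 \<le> g'' s" if "s \<in> {0..1}" for s
    proof -
      have "s * z \<le> Z"
      proof -
        have "s * z \<le> \<bar>s * z\<bar>" by simp
        also have "\<dots> = s * \<bar>z\<bar>" using that by (simp add: abs_mult)
        also have "\<dots> \<le> 1 * \<bar>z\<bar>" using that by (intro mult_right_mono) auto
        finally show ?thesis using zZ by simp
      qed
      then have "exp (s * z) \<le> exp Z" by simp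
      then have "z\<^sup>2 * exp (s * z) \<le> z\<^sup>2 * exp Z" by (intro mult_left_mono) auto
      then have "z\<^sup>2 * exp (s * z) \<le> exp Z * z\<^sup>2" by (simp add: mult.commute)
      then show ?thesis by (simp add: g''_def a_def)
    qed
  qed
  have "g ((1 - t) * 0 + t * 1) \<le> (1 - t) * g 0 + t * g 1"
    using convex_onD[OF conv, of t 0 1] t by simp
  then have "a * t\<^sup>2 - exp (t * z) \<le> (1 - t) * (- 1) + t * (a - exp z)" by (simp add: g_def)
  moreover have "1 / 2 * t * (1 - t) * z\<^sup>2 * exp Z = a * t - a * t\<^sup>2"
    unfolding a_def by (simp add: power2_eq_square field_simps)
  ultimately show ?thesis by (simp add: algebra_simps)
qed

lemma joint_convex:
  fixes l0 l1 w0 w1 t p :: real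
  assumes pos: "0 < l0" "0 < l1" "0 < w0" "0 < w1" and t: "0 \<le> t" "t \<le> 1" and p: "1 \<le> p"
  shows "((1 - t) * l0 + t * l1) powr p * ((1 - t) * w0 + t * w1) powr (1 - p)
    \<le> (1 - t) * (l0 powr p * w0 powr (1 - p)) + t * (l1 powr p * w1 powr (1 - p))"
proof -
  define W where "W = (1 - t) * w0 + t * w1"
  define l where "l = (1 - t) * l0 + t * l1"
  have W: "W > 0"
  proof (cases "t = 0")
    case True then show ?thesis using pos by (simp add: W_def)
  next
    case False
    then have "t * w1 > 0" using t pos by simp
    moreover have "(1 - t) * w0 \<ge> 0" using t pos by simp
    ultimately show ?thesis by (simp add: W_def)
  qed
  have l: "l > 0"
  proof (cases "t = 0")
    case True then show ?thesis using pos by (simp add: l_def)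
  next
    case False
    then have "t * l1 > 0" using t pos by simp
    moreover have "(1 - t) * l0 \<ge> 0" using t pos by simp
    ultimately show ?thesis by (simp add: l_def)
  qed
  define lam where "lam = (1 - t) * w0 / W"
  have lam: "0 \<le> lam" "lam \<le> 1" "1 - lam = t * w1 / W"
    using W t pos by (auto simp: lam_def W_def field_simps)
  have r1: "lam * (l0 / w0) = (1 - t) * l0 / W" using pos by (simp add: lam_def)
  have r2: "(1 - lam) * (l1 / w1) = t * l1 / W" using pos by (simp add: lam(3))
  have ratio: "l / W = lam * (l0 / w0) + (1 - lam) * (l1 / w1)"
    unfolding r1 r2 by (simp add: l_def add_divide_distrib)
  have "(l / W) powr p \<le> lam * (l0 / w0) powr p + (1 - lam) * (l1 / w1) powr p"
  proof -
    have "(lam * (l0 / w0) + (1 - lam) * (l1 / w1)) powr p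
        \<le> lam * (l0 / w0) powr p + (1 - lam) * (l1 / w1) powr p"
      using convex_onD[OF powr_convex[OF p], of "1 - lam" "l0 / w0" "l1 / w1"] lam(1,2) pos by simp
    then show ?thesis unfolding ratio by simp
  qed
  then have "W * (l / W) powr p \<le> W * (lam * (l0 / w0) powr p + (1 - lam) * (l1 / w1) powr p)"
    using W by (simp add: mult_left_mono)
  moreover have "W * (l / W) powr p = l powr p * W powr (1 - p)"
    using W l by (simp add: powr_divide powr_diff field_simps)
  moreover have "W * (lam * (l0 / w0) powr p) = (1 - t) * (l0 powr p * w0 powr (1 - p))"
    using W pos by (simp add: lam_def powr_divide powr_diff field_simps)
  moreover have "W * ((1 - lam) * (l1 / w1) powr p) = t * (l1 powr p * w1 powr (1 - p))"
    using W pos by (simp add: lam(3) powr_divide powr_diff field_simps)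
  ultimately show ?thesis by (simp add: W_def l_def distrib_left)
qed

lemma powr_correction:
  fixes v w p :: real
  assumes v: "0 < v" and w: "0 < w" and p: "1 < p"
  shows "v powr (1 - p) \<le> w powr (1 - p) + (p - 1) * v powr (- p) * max 0 (w - v)"
proof (cases "w \<le> v")
  case True
  then have "v powr (1 - p) \<le> w powr (1 - p)"
    using v w p by (intro powr_mono2') auto
  moreover have "0 \<le> (p - 1) * v powr (- p) * max 0 (w - v)" using p by simp
  ultimately show ?thesis by linarith
next
  case False
  then have vw: "v < w" by simp
  have der: "DERIV (\<lambda>s. s powr (1 - p)) s :> (1 - p) * s powr (1 - p - 1)" if "v \<le> s" for s
    using that v by (intro has_real_derivative_powr) auto
  obtain \<xi> where xi: "v < \<xi>" "\<xi> < w" "w powr (1 - p) - v powr (1 - p) = (w - v) * ((1 - p) * \<xi> powr (1 - p - 1))"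
    using MVT2[OF vw, of "\<lambda>s. s powr (1 - p)" "\<lambda>s. (1 - p) * s powr (1 - p - 1)"] der by auto
  have "\<xi> powr (- p) \<le> v powr (- p)"
    using xi v p by (intro powr_mono2') auto
  then have "(p - 1) * \<xi> powr (- p) * (w - v) \<le> (p - 1) * v powr (- p) * (w - v)"
    using p vw by (intro mult_right_mono mult_left_mono) auto
  moreover have "v powr (1 - p) = w powr (1 - p) + (p - 1) * \<xi> powr (- p) * (w - v)"
    using xi(3) by (simp add: algebra_simps)
  ultimately show ?thesis using vw by simp
qed


lemma exp_powr_real: "exp (a::real) powr b = exp (b * a)"
  by (simp add: powr_def)

context Vset
begin

lemma pointwise:
  fixes p t j B d D x :: real
  assumes p: "1 < p" and t: "0 \<le> t" "t \<le> 1" and j: "0 < j" "j \<le> B" and B: "1 \<le> B" and dD: "\<bar>d\<bar> \<le> D"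
  defines "q \<equiv> p / (p - 1)"
  defines "K \<equiv> B powr p * (p - 1) * exp (p * q * L * D) * exp (q * L * D) * (q\<^sup>2 * L\<^sup>2 + q * L)"
  shows "((1 - t) + t * j) powr p * exp (p * (V x - V (x + t * d)))
         \<le> (1 - t) + t * (j powr p * exp (p * (V x - V (x + d)))) + K / 2 * t * (1 - t) * d\<^sup>2"
proof -
  have L0: "0 \<le> L" by (rule L_nonneg)
  have q0: "0 < q" using p by (simp add: q_def)
  have qp: "(1 - p) * q = - p" using p by (simp add: q_def field_simps)
  define W where "W s = V (x + s * d) - V x" for s
  have Wb: "\<bar>W s\<bar> \<le> L * D" if "0 \<le> s" "s \<le> 1" for s
  proof -
    have "\<bar>W s\<bar> \<le> L * \<bar>s * d\<bar>" using V_lipD[of "x + s * d" x] by (simp add: W_def)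
    also have "\<bar>s * d\<bar> \<le> D"
    proof -
      have "\<bar>s * d\<bar> = s * \<bar>d\<bar>" using that by (simp add: abs_mult)
      also have "\<dots> \<le> 1 * D" using that dD by (intro mult_mono) auto
      finally show ?thesis by simp
    qed
    then have "L * \<bar>s * d\<bar> \<le> L * D" using L0 by (intro mult_left_mono)
    finally show ?thesis .
  qed
  define W1 where "W1 = V (x + d) - V x"
  have W1: "W 1 = W1" by (simp add: W_def W1_def)
  have W1d: "\<bar>W1\<bar> \<le> L * \<bar>d\<bar>" using V_lipD[of "x + d" x] by (simp add: W1_def)
  define z where "z = q * W1"
  define Z where "Z = q * L * D"
  have zZ: "\<bar>z\<bar> \<le> Z"
  proof -
    have "\<bar>W1\<bar> \<le> L * D" using Wb[of 1] W1 by simp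
    have "\<bar>z\<bar> = q * \<bar>W1\<bar>" using q0 by (simp add: z_def abs_mult)
    also have "\<dots> \<le> q * (L * D)" using \<open>\<bar>W1\<bar> \<le> L * D\<close> q0 by (intro mult_left_mono) auto
    finally show ?thesis by (simp add: Z_def mult.assoc)
  qed
  have z2: "z\<^sup>2 \<le> q\<^sup>2 * L\<^sup>2 * d\<^sup>2"
  proof -
    have "\<bar>z\<bar> = q * \<bar>W1\<bar>" using q0 by (simp add: z_def abs_mult)
    also have "\<dots> \<le> q * (L * \<bar>d\<bar>)" using W1d q0 by (intro mult_left_mono) auto
    finally have "\<bar>z\<bar> \<le> q * (L * \<bar>d\<bar>)" .
    then have "\<bar>z\<bar>\<^sup>2 \<le> (q * (L * \<bar>d\<bar>))\<^sup>2" by (intro power_mono) auto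
    then show ?thesis by (simp add: power_mult_distrib)
  qed
  define v where "v = exp (q * W t)"
  define w where "w = (1 - t) + t * exp z"
  define l where "l = (1 - t) + t * j"
  have v0: "0 < v" by (simp add: v_def)
  have w0: "0 < w"
  proof (cases "t = 0")
    case True then show ?thesis by (simp add: w_def)
  next
    case False then have "0 < t * exp z" using t by simp
    then show ?thesis using t by (simp add: w_def add_nonneg_pos)
  qed
  have l0: "0 < l"
  proof (cases "t = 0")
    case True then show ?thesis by (simp add: l_def)
  next
    case False then have "0 < t * j" using t j by simp
    then show ?thesis using t by (simp add: l_def add_nonneg_pos)
  qed
  have lB: "l \<le> B"
  proof -
    have "(1 - t) * 1 \<le> (1 - t) * B" using t B by (intro mult_left_mono) auto
    moreover have "t * j \<le> t * B" using t j by (intro mult_left_mono) auto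
    ultimately show ?thesis by (simp add: l_def algebra_simps)
  qed
  have vmin: "v \<ge> exp (- Z)"
  proof -
    have "- (L * D) \<le> W t" using Wb[OF t] by (simp add: abs_le_iff)
    then have "q * (- (L * D)) \<le> q * W t" using q0 by (intro mult_left_mono) auto
    then show ?thesis by (simp add: v_def Z_def mult.assoc)
  qed
  have vpow: "v powr (- p) \<le> exp (p * Z)"
  proof -
    have "v powr (- p) \<le> exp (- Z) powr (- p)"
      using vmin p by (intro powr_mono2') auto
    also have "\<dots> = exp (p * Z)" by (simp add: exp_powr_real)
    finally show ?thesis .
  qed
  have Wsc: "W t \<ge> t * W1 - L / 2 * t * (1 - t) * d\<^sup>2"
    using V_semiconcave[OF t, of x d] by (simp add: W_def W1_def algebra_simps)
  define e where "e = q * L / 2 * t * (1 - t) * d\<^sup>2"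
  have e0: "0 \<le> e" using q0 L0 t by (simp add: e_def)
  have v1: "v \<ge> exp (t * z) * exp (- e)"
  proof -
    have "q * (t * W1 - L / 2 * t * (1 - t) * d\<^sup>2) \<le> q * W t"
      using Wsc q0 by (intro mult_left_mono) auto
    moreover have "q * (t * W1 - L / 2 * t * (1 - t) * d\<^sup>2) = t * z + - e"
      by (simp add: z_def e_def algebra_simps)
    ultimately show ?thesis by (simp add: v_def mult_exp_exp)
  qed
  have tzZ: "exp (t * z) \<le> exp Z"
  proof -
    have "t * z \<le> \<bar>t * z\<bar>" by simp
    also have "\<dots> = t * \<bar>z\<bar>" using t by (simp add: abs_mult)
    also have "\<dots> \<le> 1 * Z" using t zZ by (intro mult_mono) auto
    finally show ?thesis by simp
  qed
  have v2: "v \<ge> exp (t * z) - exp Z * e"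
  proof -
    have "1 - e \<le> exp (- e)" using exp_ge_add_one_self[of "- e"] by simp
    then have "exp (t * z) * (1 - e) \<le> exp (t * z) * exp (- e)" by (intro mult_left_mono) auto
    moreover have "exp (t * z) * e \<le> exp Z * e" using tzZ e0 by (intro mult_right_mono)
    ultimately show ?thesis using v1 by (simp add: algebra_simps)
  qed
  have v3: "exp (t * z) \<ge> w - 1 / 2 * t * (1 - t) * z\<^sup>2 * exp Z"
    using exp_semiconcave[OF zZ t] by (simp add: w_def)
  define Eb where "Eb = 1 / 2 * t * (1 - t) * (q\<^sup>2 * L\<^sup>2 * d\<^sup>2) * exp Z + t * (1 - t) * d\<^sup>2 * exp Z * (q * L) / 2"
  have Ebnd: "w - v \<le> Eb"
  proof -
    have tt: "0 \<le> t * (1 - t)" using t by simp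
    have a1: "1 / 2 * t * (1 - t) * z\<^sup>2 * exp Z \<le> 1 / 2 * t * (1 - t) * (q\<^sup>2 * L\<^sup>2 * d\<^sup>2) * exp Z"
      using z2 tt by (intro mult_right_mono mult_left_mono) (auto simp: mult.assoc)
    have a2: "exp Z * e = t * (1 - t) * d\<^sup>2 * exp Z * (q * L) / 2"
      by (simp add: e_def algebra_simps)
    have "w - v \<le> 1 / 2 * t * (1 - t) * z\<^sup>2 * exp Z + exp Z * e" using v2 v3 by linarith
    also have "\<dots> \<le> Eb" unfolding Eb_def a2 using a1 by (rule add_right_mono)
    finally show ?thesis .
  qed
  have Eb0: "0 \<le> Eb" using t q0 L0 by (simp add: Eb_def)
  have lhs: "((1 - t) + t * j) powr p * exp (p * (V x - V (x + t * d))) = l powr p * v powr (1 - p)"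
  proof -
    have "v powr (1 - p) = exp ((1 - p) * (q * W t))" by (simp add: v_def exp_powr_real)
    also have "(1 - p) * (q * W t) = - p * W t" by (simp add: qp mult.assoc[symmetric])
    also have "- p * W t = p * (V x - V (x + t * d))" by (simp add: W_def algebra_simps)
    finally show ?thesis by (simp add: l_def)
  qed
  have rhs1: "j powr p * exp (p * (V x - V (x + d))) = j powr p * exp z powr (1 - p)"
  proof -
    have "exp z powr (1 - p) = exp ((1 - p) * q * W1)" by (simp add: z_def exp_powr_real mult.assoc)
    also have "(1 - p) * q * W1 = - p * W1" by (simp add: qp)
    also have "- p * W1 = p * (V x - V (x + d))" by (simp add: W1_def algebra_simps)
    finally show ?thesis by simp
  qed
  have corr: "v powr (1 - p) \<le> w powr (1 - p) + (p - 1) * v powr (- p) * max 0 (w - v)"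
    by (rule powr_correction[OF v0 w0 p])
  have corr2: "(p - 1) * v powr (- p) * max 0 (w - v) \<le> (p - 1) * exp (p * Z) * Eb"
    using vpow Ebnd Eb0 p by (intro mult_mono) auto
  have jc: "l powr p * w powr (1 - p) \<le> (1 - t) + t * (j powr p * exp z powr (1 - p))"
    unfolding l_def w_def using joint_convex[of 1 j 1 "exp z" t p] j t p by simp
  have c0: "l powr p * v powr (1 - p) \<le> l powr p * (w powr (1 - p) + (p - 1) * exp (p * Z) * Eb)"
    using corr corr2 l0 by (intro mult_left_mono) auto
  have c1: "l powr p * (w powr (1 - p) + (p - 1) * exp (p * Z) * Eb) = l powr p * w powr (1 - p) + l powr p * ((p - 1) * exp (p * Z) * Eb)"
    by (simp add: algebra_simps)
  have c2: "l powr p * ((p - 1) * exp (p * Z) * Eb) \<le> B powr p * ((p - 1) * exp (p * Z) * Eb)"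
    using l0 lB p Eb0 by (intro mult_right_mono powr_mono2) auto
  have c3: "B powr p * ((p - 1) * exp (p * Z) * Eb) = K / 2 * t * (1 - t) * d\<^sup>2"
  proof -
    have e1: "exp (p * q * L * D) = exp (p * Z)" "exp (q * L * D) = exp Z" by (simp_all add: Z_def mult.assoc)
    have e2: "Eb = t * (1 - t) * d\<^sup>2 * exp Z * (q\<^sup>2 * L\<^sup>2 + q * L) / 2"
      by (simp add: Eb_def field_simps)
    show ?thesis unfolding K_def e1 e2
      by (simp add: field_simps)
  qed
  have X: "l powr p * v powr (1 - p) \<le> l powr p * w powr (1 - p) + K / 2 * t * (1 - t) * d\<^sup>2"
    using c0 c1 c2 c3 by linarith
  show ?thesis unfolding lhs rhs1 using X jc by linarith
qed

end

context Vset
begin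

lemma V_meas[measurable]: "V \<in> borel_measurable borel"
  by (intro borel_measurable_continuous_onI V_contin)

end

context fset
begin

definition "phi r s x = JJ s x powr (r + 1) * exp ((r + 1) * (V x - V (Tt s x)))"

lemma integrand_eq:
  assumes s: "0 \<le> s" "s \<le> 1"
  shows "JJ s x * (exp (- (r + 1) * V (Tt s x)) / (m x / JJ s x) powr r) = m x * phi r s x"
proof -
  define J where "J = JJ s x"
  define M where "M = m x"
  define a where "a = exp (- (r + 1) * V (Tt s x))"
  have J: "0 < J" unfolding J_def by (rule JJ_pos[OF s])
  have M: "0 < M" unfolding M_def by (rule m_pos)
  have 1: "(M / J) powr r = M powr r / J powr r"
    using J M by (simp add: powr_divide less_imp_le)
  have 2: "J * (a / (M powr r / J powr r)) = (J * J powr r) * (a / M powr r)"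
    using J M by (simp add: field_simps)
  have 3: "J * J powr r = J powr (r + 1)"
    using J by (simp add: powr_add)
  have Mr: "M powr r = exp (- (r * V x))" by (simp add: M_def m_def exp_powr_real)
  have 4: "a / M powr r = M * exp ((r + 1) * (V x - V (Tt s x)))"
  proof -
    have "a / M powr r = exp (- (r + 1) * V (Tt s x) - - (r * V x))"
      unfolding Mr a_def by (rule exp_diff[symmetric])
    also have "- (r + 1) * V (Tt s x) - - (r * V x) = - V x + (r + 1) * (V x - V (Tt s x))"
      by (simp add: algebra_simps)
    also have "exp (- V x + (r + 1) * (V x - V (Tt s x))) = M * exp ((r + 1) * (V x - V (Tt s x)))"
      by (simp add: M_def m_def mult_exp_exp algebra_simps)
    finally show ?thesis .
  qed
  have "JJ s x * (exp (- (r + 1) * V (Tt s x)) / (m x / JJ s x) powr r) = J * (a / (M / J) powr r)"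
    by (simp add: J_def M_def a_def)
  also have "\<dots> = J powr (r + 1) * (M * exp ((r + 1) * (V x - V (Tt s x))))"
    unfolding 1 2 3 4 ..
  also have "\<dots> = m x * phi r s x"
    by (simp add: phi_def J_def M_def)
  finally show ?thesis .
qed

lemma phi0: "phi r 0 x = 1"
  by (simp add: phi_def JJ_def Tt_def)

lemma phi_meas[measurable]: "phi r s \<in> borel_measurable borel"
  unfolding phi_def by measurable

lemma Frho_phi:
  assumes s: "0 \<le> s" "s \<le> 1"
  shows "Frho r (\<lambda>x. exp (- (r + 1) * V x)) (distr mM.HH lborel (Tt s))
       = (\<integral>\<^sup>+x. ennreal (m x * phi r s x) \<partial>lborel)"
proof -
  have "Frho r (\<lambda>x. exp (- (r + 1) * V x)) (distr mM.HH lborel (Tt s))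
      = (\<integral>\<^sup>+x. ennreal (JJ s x * (exp (- (r + 1) * V (Tt s x)) / (m x / JJ s x) powr r)) \<partial>lborel)"
    by (rule Frho_mu[OF s]) measurable
  also have "\<dots> = (\<integral>\<^sup>+x. ennreal (m x * phi r s x) \<partial>lborel)"
    by (simp only: integrand_eq[OF s])
  finally show ?thesis .
qed

lemma jj_bound:
  assumes "\<bar>T x - x\<bar> \<le> D"
  shows "jj x \<le> exp (L * D) / c"
proof -
  have "c * m (T x) \<le> f (T x)" using f_bounds by blast
  moreover have "0 < f (T x) * (c * m (T x))" using m_pos c_pos f_pos by simp
  ultimately have "jj x \<le> m x / (c * m (T x))"
    unfolding jj_def using m_pos by (intro divide_left_mono) (auto simp: less_imp_le)
  also have "\<dots> = exp (V (T x) - V x) / c"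
    using c_pos by (simp add: m_def exp_diff exp_minus field_simps)
  also have "\<dots> \<le> exp (L * D) / c"
  proof -
    have "V (T x) - V x \<le> L * \<bar>T x - x\<bar>" using V_lipD[of "T x" x] by simp
    also have "\<dots> \<le> L * D" using assms L_nonneg by (intro mult_left_mono)
    finally show ?thesis using c_pos by (simp add: divide_right_mono)
  qed
  finally show ?thesis .
qed

lemma geodesic_ineq:
  assumes a0: "deriv V x0 < 0" and a1: "deriv V x1 > 0" and r: "1 < r" and t: "0 \<le> t" "t \<le> 1"
  defines "D \<equiv> 2 * (\<bar>ln c\<bar> + \<bar>ln C\<bar> + 1) / min (- deriv V x0) (deriv V x1) + \<bar>x1 - x0\<bar> + 1"
  defines "B \<equiv> max 1 (exp (L * D) / c)"
  defines "K \<equiv> B powr (r + 1) * (r + 1 - 1) * exp ((r + 1) * ((r + 1) / (r + 1 - 1)) * L * D)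
                * exp ((r + 1) / (r + 1 - 1) * L * D) * (((r + 1) / (r + 1 - 1))\<^sup>2 * L\<^sup>2 + (r + 1) / (r + 1 - 1) * L)"
  shows "Frho r (\<lambda>x. exp (- (r + 1) * V x)) (distr mM.HH lborel (Tt t))
     \<le> ennreal (1 - t) * Frho r (\<lambda>x. exp (- (r + 1) * V x)) mM.HH
       + ennreal t * Frho r (\<lambda>x. exp (- (r + 1) * V x)) fN.HH
       + ennreal (K / 2 * t * (1 - t)) * W2sq mM.HH fN.HH"
proof -
  let ?\<rho> = "\<lambda>x. exp (- (r + 1) * V x)"
  have dsp: "\<bar>T x - x\<bar> \<le> D" for x unfolding D_def by (rule displacement_aux[OF a0 a1])
  have B1: "1 \<le> B" by (simp add: B_def)
  have K0: "0 \<le> K"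
    unfolding K_def using r B1 L_nonneg by (intro mult_nonneg_nonneg add_nonneg_nonneg) auto
  have pw: "m x * phi r t x \<le> (1 - t) * (m x * phi r 0 x) + t * (m x * phi r 1 x) + K / 2 * t * (1 - t) * ((x - T x)\<^sup>2 * m x)" for x
  proof -
    have jb: "jj x \<le> B" using jj_bound[OF dsp[of x]] by (simp add: B_def)
    have main: "((1 - t) + t * jj x) powr (r + 1) * exp ((r + 1) * (V x - V (x + t * (T x - x))))
         \<le> (1 - t) + t * (jj x powr (r + 1) * exp ((r + 1) * (V x - V (x + (T x - x))))) + K / 2 * t * (1 - t) * (T x - x)\<^sup>2"
      unfolding K_def
      by (rule pointwise[of "r + 1" t "jj x" B "T x - x" D x]) (use r t jj_pos jb B1 dsp in auto)
    have e1: "x + t * (T x - x) = Tt t x" by (simp add: Tt_def algebra_simps)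
    have "phi r t x \<le> (1 - t) * phi r 0 x + t * phi r 1 x + K / 2 * t * (1 - t) * (x - T x)\<^sup>2"
      using main by (simp add: phi_def JJ_def Tt_def e1 power2_commute)
    then have "m x * phi r t x \<le> m x * ((1 - t) * phi r 0 x + t * phi r 1 x + K / 2 * t * (1 - t) * (x - T x)\<^sup>2)"
      using m_pos by (intro mult_left_mono) (auto simp: less_imp_le)
    then show ?thesis by (simp add: algebra_simps)
  qed
  have nn: "0 \<le> m x * phi r s x" for s x using m_pos by (simp add: phi_def less_imp_le)
  have "Frho r ?\<rho> (distr mM.HH lborel (Tt t)) = (\<integral>\<^sup>+x. ennreal (m x * phi r t x) \<partial>lborel)"
    by (rule Frho_phi[OF t])
  also have "\<dots> \<le> (\<integral>\<^sup>+x. ennreal (1 - t) * ennreal (m x * phi r 0 x) + ennreal t * ennreal (m x * phi r 1 x)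
        + ennreal (K / 2 * t * (1 - t)) * ennreal ((x - T x)\<^sup>2 * m x) \<partial>lborel)"
  proof (rule nn_integral_mono)
    fix x
    have "ennreal (m x * phi r t x) \<le> ennreal ((1 - t) * (m x * phi r 0 x) + t * (m x * phi r 1 x) + K / 2 * t * (1 - t) * ((x - T x)\<^sup>2 * m x))"
      by (rule ennreal_leI[OF pw])
    also have "\<dots> = ennreal (1 - t) * ennreal (m x * phi r 0 x) + ennreal t * ennreal (m x * phi r 1 x)
        + ennreal (K / 2 * t * (1 - t)) * ennreal ((x - T x)\<^sup>2 * m x)"
    proof -
      have X0: "0 \<le> m x * phi r 0 x" "0 \<le> m x * phi r 1 x" "0 \<le> (x - T x)\<^sup>2 * m x"
        using nn[of x 0] nn[of x 1] m_pos[of x] by (auto simp: less_imp_le)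
      have X1: "0 \<le> K / 2 * t * (1 - t)" using K0 t by simp
      have h1: "0 \<le> (1 - t) * (m x * phi r 0 x)" using X0 t by simp
      have h2: "0 \<le> t * (m x * phi r 1 x)" using X0 t by simp
      have h3: "0 \<le> K / 2 * t * (1 - t) * ((x - T x)\<^sup>2 * m x)" using X0 X1 by simp
      have "ennreal ((1 - t) * (m x * phi r 0 x) + t * (m x * phi r 1 x) + K / 2 * t * (1 - t) * ((x - T x)\<^sup>2 * m x))
          = ennreal ((1 - t) * (m x * phi r 0 x)) + ennreal (t * (m x * phi r 1 x)) + ennreal (K / 2 * t * (1 - t) * ((x - T x)\<^sup>2 * m x))"
        using h1 h2 h3 by (simp add: ennreal_plus)
      also have "\<dots> = ennreal (1 - t) * ennreal (m x * phi r 0 x) + ennreal t * ennreal (m x * phi r 1 x)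
          + ennreal (K / 2 * t * (1 - t)) * ennreal ((x - T x)\<^sup>2 * m x)"
      proof -
        have e1: "ennreal ((1 - t) * (m x * phi r 0 x)) = ennreal (1 - t) * ennreal (m x * phi r 0 x)"
          by (rule ennreal_mult) (use t X0 in auto)
        have e2: "ennreal (t * (m x * phi r 1 x)) = ennreal t * ennreal (m x * phi r 1 x)"
          by (rule ennreal_mult) (use t X0 in auto)
        have e3: "ennreal (K / 2 * t * (1 - t) * ((x - T x)\<^sup>2 * m x)) = ennreal (K / 2 * t * (1 - t)) * ennreal ((x - T x)\<^sup>2 * m x)"
          by (rule ennreal_mult[OF X1 X0(3)])
        show ?thesis by (simp only: e1 e2 e3)
      qed
      finally show ?thesis .
    qed
    finally show "ennreal (m x * phi r t x) \<le> ennreal (1 - t) * ennreal (m x * phi r 0 x) + ennreal t * ennreal (m x * phi r 1 x)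
        + ennreal (K / 2 * t * (1 - t)) * ennreal ((x - T x)\<^sup>2 * m x)" .
  qed
  also have "\<dots> = ennreal (1 - t) * (\<integral>\<^sup>+x. ennreal (m x * phi r 0 x) \<partial>lborel)
      + ennreal t * (\<integral>\<^sup>+x. ennreal (m x * phi r 1 x) \<partial>lborel)
      + ennreal (K / 2 * t * (1 - t)) * (\<integral>\<^sup>+x. ennreal ((x - T x)\<^sup>2 * m x) \<partial>lborel)"
    by (simp add: nn_integral_add nn_integral_cmult)
  also have "(\<integral>\<^sup>+x. ennreal (m x * phi r 0 x) \<partial>lborel) = Frho r ?\<rho> mM.HH"
    using Frho_phi[of 0] mu0 by simp
  also have "(\<integral>\<^sup>+x. ennreal (m x * phi r 1 x) \<partial>lborel) = Frho r ?\<rho> fN.HH"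
    using Frho_phi[of 1] mu1 by simp
  also have "(\<integral>\<^sup>+x. ennreal ((x - T x)\<^sup>2 * m x) \<partial>lborel) = (\<integral>\<^sup>+x. ennreal ((x - T x)\<^sup>2) \<partial>mM.HH)"
    by (simp add: mM.HH_def nn_integral_density ennreal_mult'' m_pos less_imp_le mult.commute)
  also have "ennreal (K / 2 * t * (1 - t)) * (\<integral>\<^sup>+x. ennreal ((x - T x)\<^sup>2) \<partial>mM.HH)
      \<le> ennreal (K / 2 * t * (1 - t)) * W2sq mM.HH fN.HH"
    by (intro mult_left_mono W2_lower) simp
  finally show ?thesis by (simp add: add_left_mono)
qed

end


theorem proposition2p2:
  fixes r L c C :: real and V :: "real \<Rightarrow> real"
  assumes r: "r > 1"
    and V_convex: "convex_on UNIV V"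
    and V_lip: "L-lipschitz_on UNIV V"
    and V_diff: "\<forall>x. V differentiable (at x)"
    and V'_lip: "L-lipschitz_on UNIV (deriv V)"
    and m_prob: "((\<lambda>x. exp (- V x)) has_integral 1) UNIV"
    and cC: "0 < c" "c < C"
  shows "\<exists>lam\<ge>0. \<forall>f \<in> Pcc (\<lambda>x. exp (- V x)) c C. \<forall>t \<in> {0..1}.
     Frho r (\<lambda>x. exp (- (r + 1) * V x))
        (w2_geodesic (density lborel (\<lambda>x. exp (- V x))) (density lborel f) t)
     \<le> ennreal (1 - t) * Frho r (\<lambda>x. exp (- (r + 1) * V x)) (density lborel (\<lambda>x. exp (- V x)))
       + ennreal t * Frho r (\<lambda>x. exp (- (r + 1) * V x)) (density lborel f)
       + ennreal (lam / 2 * t * (1 - t)) * W2sq (density lborel (\<lambda>x. exp (- V x))) (density lborel f)"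
proof -
  interpret VV: Vset V L
    using V_convex V_lip V_diff V'_lip m_prob by unfold_locales auto
  obtain x0 where a0: "deriv V x0 < 0" using VV.ex_neg by blast
  obtain x1 where a1: "deriv V x1 > 0" using VV.ex_pos by blast
  define D where "D = 2 * (\<bar>ln c\<bar> + \<bar>ln C\<bar> + 1) / min (- deriv V x0) (deriv V x1) + \<bar>x1 - x0\<bar> + 1"
  define B where "B = max 1 (exp (L * D) / c)"
  define K where "K = B powr (r + 1) * (r + 1 - 1) * exp ((r + 1) * ((r + 1) / (r + 1 - 1)) * L * D)
                * exp ((r + 1) / (r + 1 - 1) * L * D) * (((r + 1) / (r + 1 - 1))\<^sup>2 * L\<^sup>2 + (r + 1) / (r + 1 - 1) * L)"
  have B1: "1 \<le> B" by (simp add: B_def)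
  have K0: "0 \<le> K"
    unfolding K_def using r B1 VV.L_nonneg by (intro mult_nonneg_nonneg add_nonneg_nonneg) auto
  have hm: "density lborel (\<lambda>x. ennreal (exp (- V x))) = VV.mM.HH"
    by (simp add: VV.mM.HH_def VV.m_def)
  show ?thesis
  proof (intro exI[of _ K] conjI ballI)
    show "0 \<le> K" by (rule K0)
    fix f :: "real \<Rightarrow> real" and t :: real assume f: "f \<in> Pcc (\<lambda>x. exp (- V x)) c C" and t: "t \<in> {0..1}"
    interpret F: fset V L c C f
      using f cC by unfold_locales (auto simp: Pcc_def VV.m_def)
    have hf: "density lborel (\<lambda>x. ennreal (f x)) = F.fN.HH"
      by (simp add: F.fN.HH_def)
    have geo: "w2_geodesic VV.mM.HH F.fN.HH t = distr VV.mM.HH lborel (F.Tt t)"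
      unfolding w2_geodesic_def
      by (simp add: F.Tt_def[abs_def] ot_map_def F.T_def[abs_def] VV.mM.FF_def o_def)
    show "Frho r (\<lambda>x. exp (- (r + 1) * V x))
        (w2_geodesic (density lborel (\<lambda>x. ennreal (exp (- V x)))) (density lborel (\<lambda>x. ennreal (f x))) t)
     \<le> ennreal (1 - t) * Frho r (\<lambda>x. exp (- (r + 1) * V x)) (density lborel (\<lambda>x. ennreal (exp (- V x))))
       + ennreal t * Frho r (\<lambda>x. exp (- (r + 1) * V x)) (density lborel (\<lambda>x. ennreal (f x)))
       + ennreal (K / 2 * t * (1 - t)) * W2sq (density lborel (\<lambda>x. ennreal (exp (- V x)))) (density lborel (\<lambda>x. ennreal (f x)))"
      unfolding hm hf geo
      using F.geodesic_ineq[OF a0 a1 r, of t] t by (simp add: D_def B_def K_def)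
  qed
qed

end
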